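(* Let $X,Y$ be finite-dimensional real Euclidean spaces, $g:X\to(-\infty,+\infty]$ and $f:Y\to(-\infty,+\infty]$ proper closed convex functions, $f^*$ the convex conjugate of $f$, $K:X\to Y$ a linear operator with $L=\|K\|$, and assume the saddle point problem $\min_{x\in X}\max_{y\in Y} \mathcal{L}(x,y)=g(x)+\langle Kx,y\rangle-f^*(y)$ has at least one saddle point. Let $\{a_k\}_{k\ge1},\{b_k\}_{k\ge1}\subset(0,1)$ be monotonically non-increasing sequences, let $\tau,\sigma>0$ satisfy $\sqrt{\sigma\tau}\,L<1-a_k$ and $\sqrt{\sigma\tau}\,L<1-b_k$ for all $k$, and let $\theta=1$. Given $(x_0,y_1)\in X\times Y$, set $x_0^{ag}=x_0=x_{-1}$, $y_1^{ag}=y_1$, and for $k=1,2,\dots$ compute $$x_k^{ag}=(1-a_k)x_{k-1}^{ag}+a_kx_{k-1},\qquad y_{k+1}^{ag}=(1-b_{k+1})y_k^{ag}+b_{k+1}y_k,$$ $$x_k^{md}=(1-a_k)x_{k-1}+a_kx_k^{ag},\qquad y_{k+1}^{md}=(1-b_{k+1})y_k+b_{k+1}y_{k+1}^{ag},$$ $$x_k=\mathrm{Prox}_{\tau g}(x_k^{md}-\tau K^Ty_k),\quad \bar x_k=x_k+\theta(x_k-x_{k-1}),\quad y_{k+1}=\mathrm{Prox}_{\sigma f^*}(y_{k+1}^{md}+\sigma K\bar x_k).$$ Then the sequence $\{(x_k,y_k)\}$ converges to a saddle point of $\mathcal{L}$.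
   Context: For a proper closed convex $h$ and $\lambda>0$, $\mathrm{Prox}_{\lambda h}(x)=\arg\min_{z}\{h(z)+\frac{1}{2\lambda}\|z-x\|^2\}$. $K^T$ denotes the adjoint of $K$ and $\|K\|$ its operator (spectral) norm. A saddle point $(\hat x,\hat y)$ of $\mathcal{L}$ is a pair with $\mathcal{L}(\hat x,y)\le\mathcal{L}(\hat x,\hat y)\le\mathcal{L}(x,\hat y)$ for all $(x,y)\in X\times Y$. This iteration is called NPDA in the paper. *)

theory Defs
  imports "HOL-Analysis.Analysis"
begin

definition epigraph_e :: "('a \<Rightarrow> ereal) \<Rightarrow> ('a \<times> real) set" where
  "epigraph_e h = {(x, r). h x \<le> ereal r}"

definition proper_fun :: "('a \<Rightarrow> ereal) \<Rightarrow> bool" where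
  "proper_fun h \<longleftrightarrow> (\<forall>x. h x \<noteq> -\<infinity>) \<and> (\<exists>x. h x < \<infinity>)"

definition convex_fun :: "('a::real_vector \<Rightarrow> ereal) \<Rightarrow> bool" where
  "convex_fun h \<longleftrightarrow> convex (epigraph_e h)"

definition closed_fun :: "('a::topological_space \<Rightarrow> ereal) \<Rightarrow> bool" where
  "closed_fun h \<longleftrightarrow> closed (epigraph_e h)"

definition conj_fun :: "('a::real_inner \<Rightarrow> ereal) \<Rightarrow> 'a \<Rightarrow> ereal" where
  "conj_fun h y = (SUP x. ereal (x \<bullet> y) - h x)"

definition prox :: "real \<Rightarrow> ('a::real_normed_vector \<Rightarrow> ereal) \<Rightarrow> 'a \<Rightarrow> 'a" where
  "prox lam h x = (SOME z. \<forall>w. h z + ereal (norm (z - x)^2 / (2 * lam))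
                                 \<le> h w + ereal (norm (w - x)^2 / (2 * lam)))"

definition lagr :: "('a \<Rightarrow> ereal) \<Rightarrow> ('b \<Rightarrow> ereal) \<Rightarrow> ('a \<Rightarrow> 'b::real_inner) \<Rightarrow> 'a \<Rightarrow> 'b \<Rightarrow> ereal" where
  "lagr g f K x y = g x + ereal (K x \<bullet> y) - conj_fun f y"

definition saddle_point :: "('a \<Rightarrow> 'b \<Rightarrow> ereal) \<Rightarrow> 'a \<Rightarrow> 'b \<Rightarrow> bool" where
  "saddle_point L xh yh \<longleftrightarrow> (\<forall>x y. L xh y \<le> L xh yh \<and> L xh yh \<le> L x yh)"

end

theory Submission
  imports Defs
begin


definition good :: "('a::euclidean_space \<Rightarrow> ereal) \<Rightarrow> bool" where
  "good h \<longleftrightarrow> (\<forall>x. h x \<noteq> -\<infinity>) \<and> (\<exists>x. h x \<noteq> \<infinity>) \<and> convex (epigraph_e h)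
     \<and> closed (epigraph_e h) \<and> (\<exists>a c. \<forall>x. ereal (a \<bullet> x + c) \<le> h x)"

lemma epi_mem[simp]: "(x, r) \<in> epigraph_e h \<longleftrightarrow> h x \<le> ereal r"
  by (simp add: epigraph_e_def)

lemma lsc_seq:
  fixes h :: "'a::euclidean_space \<Rightarrow> ereal"
  assumes "closed (epigraph_e h)" "w \<longlonglongrightarrow> w0" "r \<longlonglongrightarrow> r0" "\<And>n. h (w n) \<le> ereal (r n)"
  shows "h w0 \<le> ereal r0"
proof -
  have "(w0, r0) \<in> epigraph_e h"
    by (rule closed_sequentially[OF assms(1), of "\<lambda>n. (w n, r n)"])
       (use assms(4) in simp, rule tendsto_Pair[OF assms(2,3)])
  then show ?thesis by simp
qed

lemma conv_epi:
  fixes h :: "'a::euclidean_space \<Rightarrow> ereal"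
  assumes "convex (epigraph_e h)" "h z \<le> ereal p" "h w \<le> ereal s" "0 \<le> t" "t \<le> 1"
  shows "h ((1 - t) *\<^sub>R z + t *\<^sub>R w) \<le> ereal ((1 - t) * p + t * s)"
proof -
  have "(1 - t) *\<^sub>R (z, p) + t *\<^sub>R (w, s) \<in> epigraph_e h"
    using assms by (intro convexD[OF assms(1)]) auto
  then show ?thesis by simp
qed

lemma nsq_add: fixes x y :: "'a::real_inner" shows "norm (x + y)^2 = norm x^2 + 2 * (x \<bullet> y) + norm y^2"
  by (simp add: power2_norm_eq_inner inner_add_left inner_add_right inner_commute)
lemma nsq_diff: fixes x y :: "'a::real_inner" shows "norm (x - y)^2 = norm x^2 - 2 * (x \<bullet> y) + norm y^2"
  by (simp add: power2_norm_eq_inner inner_diff_left inner_diff_right inner_commute)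
lemma nsq_scale: fixes x :: "'a::real_inner" shows "norm (c *\<^sub>R x)^2 = c^2 * norm x^2"
  by (simp add: power_mult_distrib)

lemma quad_lb:
  fixes a u :: "'a::real_inner"
  assumes "lam > 0"
  shows "a \<bullet> u + norm u ^ 2 / (2 * lam) \<ge> - lam * norm a ^ 2 / 2"
proof -
  have "0 \<le> norm (u + lam *\<^sub>R a) ^ 2" by simp
  also have "norm (u + lam *\<^sub>R a) ^ 2 = norm u ^ 2 + 2 * lam * (a \<bullet> u) + lam^2 * norm a ^ 2"
    by (simp add: nsq_add power_mult_distrib inner_commute)
  finally have "0 \<le> norm u ^ 2 + 2 * lam * (a \<bullet> u) + lam^2 * norm a ^ 2" .
  then have "0 \<le> (norm u ^ 2 + 2 * lam * (a \<bullet> u) + lam^2 * norm a ^ 2) / (2 * lam)"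
    using assms by simp
  also have "\<dots> = a \<bullet> u + norm u ^ 2 / (2 * lam) + lam * norm a ^ 2 / 2"
    using assms by (simp add: field_simps power2_eq_square)
  finally show ?thesis by simp
qed

lemma good_real:
  assumes "good h" "h w \<noteq> \<infinity>"
  shows "h w = ereal (real_of_ereal (h w))"
  using assms unfolding good_def by (cases "h w") auto

lemma prox_min_exists:
  fixes h :: "'a::euclidean_space \<Rightarrow> ereal"
  assumes gh: "good h" and lam: "lam > 0"
  shows "\<exists>z. \<forall>w. h z + ereal (norm (z - v) ^ 2 / (2 * lam)) \<le> h w + ereal (norm (w - v) ^ 2 / (2 * lam))"
proof -
  define q where "q w = norm (w - v) ^ 2 / (2 * lam)" for w
  define T where "T = {w. h w \<noteq> \<infinity>}"
  define Hr where "Hr w = real_of_ereal (h w)" for w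
  have hT: "h w = ereal (Hr w)" if "w \<in> T" for w
    using good_real[OF gh] that unfolding T_def Hr_def by auto
  obtain w0 where w0: "w0 \<in> T" using gh unfolding good_def T_def by auto
  obtain a c where ac: "\<And>x. ereal (a \<bullet> x + c) \<le> h x" using gh unfolding good_def by auto
  have lbw: "a \<bullet> w + c + q w \<le> Hr w + q w" if "w \<in> T" for w
    using ac[of w] hT[OF that] by simp
  have lb: "a \<bullet> v + c - lam * norm a ^ 2 / 2 \<le> Hr w + q w" if "w \<in> T" for w
  proof -
    have "a \<bullet> (w - v) + norm (w - v) ^ 2 / (2 * lam) \<ge> - lam * norm a ^ 2 / 2"
      by (rule quad_lb[OF lam])
    then show ?thesis using lbw[OF that] unfolding q_def by (simp add: inner_diff_right)
  qed
  define \<mu> where "\<mu> = Inf ((\<lambda>w. Hr w + q w) ` T)"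
  have bdd: "bdd_below ((\<lambda>w. Hr w + q w) ` T)"
    using lb by (intro bdd_belowI2) auto
  have mu_le: "\<mu> \<le> Hr w + q w" if "w \<in> T" for w
    unfolding \<mu>_def by (rule cInf_lower[OF _ bdd]) (use that in auto)
  have "\<exists>w\<in>T. Hr w + q w < \<mu> + 1 / (real n + 1)" for n
  proof -
    have "\<mu> < \<mu> + 1 / (real n + 1)" by simp
    then obtain y where "y \<in> (\<lambda>w. Hr w + q w) ` T" "y < \<mu> + 1 / (real n + 1)"
      using cInf_lessD[of "(\<lambda>w. Hr w + q w) ` T"] w0 unfolding \<mu>_def by blast
    then show ?thesis by auto
  qed
  then obtain ws where ws: "\<And>n. ws n \<in> T" "\<And>n. Hr (ws n) + q (ws n) < \<mu> + 1 / (real n + 1)"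
    by metis
  define B where "B = \<mu> + 1 - (a \<bullet> v + c) + 2 * lam * norm a ^ 2 / 2"
  have qb: "q (ws n) \<le> 2 * B" for n
  proof -
    have "a \<bullet> (ws n - v) + norm (ws n - v) ^ 2 / (2 * (2 * lam)) \<ge> - (2 * lam) * norm a ^ 2 / 2"
      by (rule quad_lb) (use lam in simp)
    moreover have "norm (ws n - v) ^ 2 / (2 * (2 * lam)) = q (ws n) / 2" unfolding q_def by simp
    moreover have "1 / (real n + 1) \<le> 1" by (simp add: field_simps)
    ultimately have "- (2 * lam) * norm a ^ 2 / 2 \<le> a \<bullet> ws n - a \<bullet> v + q (ws n) / 2"
      "1 / (real n + 1) \<le> 1"
      by (auto simp: inner_diff_right)
    moreover have "a \<bullet> ws n + c + q (ws n) \<le> Hr (ws n) + q (ws n)" by (rule lbw[OF ws(1)])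
    moreover have "- (2 * lam) * norm a ^ 2 / 2 = - (lam * norm a^2)" "2 * lam * norm a ^ 2 / 2 = lam * norm a^2" by simp_all
    ultimately show ?thesis using ws(2)[of n] unfolding B_def by argo
  qed
  have "bounded (range ws)"
  proof -
    have "ws n \<in> cball v (sqrt (4 * lam * B))" for n
    proof -
      have "norm (ws n - v) ^ 2 \<le> 4 * lam * B"
        using qb[of n] lam unfolding q_def by (simp add: field_simps)
      then have "norm (ws n - v) \<le> sqrt (4 * lam * B)" by (rule real_le_rsqrt)
      then show ?thesis by (simp add: dist_norm norm_minus_commute)
    qed
    then show ?thesis by (intro bounded_subset[OF bounded_cball]) auto
  qed
  then obtain ws0 r where r: "strict_mono r" "(ws \<circ> r) \<longlonglongrightarrow> ws0"
    using bounded_imp_convergent_subsequence by blast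
  have inv0: "(\<lambda>n. 1 / (real (r n) + 1)) \<longlonglongrightarrow> 0"
  proof -
    have "(\<lambda>n. 1 / (real n + 1)) \<longlonglongrightarrow> 0"
      using LIMSEQ_inverse_real_of_nat by (simp add: divide_inverse add.commute)
    from LIMSEQ_subseq_LIMSEQ[OF this r(1)] show ?thesis by (simp add: o_def)
  qed
  have qc: "(\<lambda>n. q (ws (r n))) \<longlonglongrightarrow> q ws0"
    unfolding q_def using r(2) lam unfolding o_def by (intro tendsto_intros) auto
  have "h ws0 \<le> ereal (\<mu> + 0 - q ws0)"
  proof (rule lsc_seq[where w = "ws \<circ> r" and r = "\<lambda>n. \<mu> + 1 / (real (r n) + 1) - q (ws (r n))"])
    show "closed (epigraph_e h)" using gh unfolding good_def by auto
    show "(ws \<circ> r) \<longlonglongrightarrow> ws0" by (rule r(2))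
    show "(\<lambda>n. \<mu> + 1 / (real (r n) + 1) - q (ws (r n))) \<longlonglongrightarrow> \<mu> + 0 - q ws0"
      by (intro tendsto_intros inv0 qc)
    show "h ((ws \<circ> r) n) \<le> ereal (\<mu> + 1 / (real (r n) + 1) - q (ws (r n)))" for n
      using ws(1,2)[of "r n"] hT[OF ws(1)[of "r n"]] by simp
  qed
  then have z: "h ws0 + ereal (q ws0) \<le> ereal \<mu>"
    by (cases "h ws0") auto
  show ?thesis
  proof (intro exI allI)
    fix w
    show "h ws0 + ereal (norm (ws0 - v) ^ 2 / (2 * lam)) \<le> h w + ereal (norm (w - v) ^ 2 / (2 * lam))"
    proof (cases "w \<in> T")
      case True
      then show ?thesis using z mu_le[OF True] hT[OF True] unfolding q_def
        by (metis order_trans plus_ereal.simps(1) ereal_less_eq(3))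
    next
      case False
      then show ?thesis unfolding T_def by simp
    qed
  qed
qed

lemma small_le0:
  fixes D C :: real
  assumes "C \<ge> 0" "\<And>t. 0 < t \<Longrightarrow> t \<le> 1 \<Longrightarrow> D \<le> t * C"
  shows "D \<le> 0"
proof (rule ccontr)
  assume "\<not> D \<le> 0"
  then have D: "D > 0" by simp
  define t where "t = min 1 (D / (C + 1))"
  have t: "0 < t" "t \<le> 1" using D assms(1) unfolding t_def by auto
  have "t * C \<le> (D / (C + 1)) * C" unfolding t_def using assms(1) by (intro mult_right_mono) auto
  also have "\<dots> < D" using D assms(1) by (simp add: field_simps)
  finally show False using assms(2)[OF t] by simp
qed

lemma prox_vi:
  fixes h :: "'a::euclidean_space \<Rightarrow> ereal"
  assumes gh: "good h" and lam: "lam > 0"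
  shows "h (prox lam h v) \<noteq> \<infinity>"
    and "ereal (real_of_ereal (h (prox lam h v)) + (v - prox lam h v) \<bullet> (w - prox lam h v) / lam) \<le> h w"
proof -
  define z where "z = prox lam h v"
  define q where "q w = norm (w - v) ^ 2 / (2 * lam)" for w
  have min: "h z + ereal (q z) \<le> h w + ereal (q w)" for w
  proof -
    have "\<forall>w. h z + ereal (q z) \<le> h w + ereal (q w)"
      unfolding z_def prox_def q_def by (rule someI_ex[OF prox_min_exists[OF gh lam]])
    then show ?thesis by blast
  qed
  obtain w0 where w0: "h w0 \<noteq> \<infinity>" using gh unfolding good_def by auto
  show hz: "h (prox lam h v) \<noteq> \<infinity>"
  proof
    assume "h (prox lam h v) = \<infinity>"
    then have "h z = \<infinity>" unfolding z_def .
    then have "h w0 + ereal (q w0) = \<infinity>" using min[of w0] by simp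
    then show False using w0 by simp
  qed
  show "ereal (real_of_ereal (h (prox lam h v)) + (v - prox lam h v) \<bullet> (w - prox lam h v) / lam) \<le> h w"
  proof (cases "h w = \<infinity>")
    case True
    then show ?thesis by simp
  next
    case False
    define Hz where "Hz = real_of_ereal (h z)"
    define Hw where "Hw = real_of_ereal (h w)"
    have ez: "h z = ereal Hz" using good_real[OF gh] hz unfolding Hz_def z_def by auto
    have ew: "h w = ereal Hw" using good_real[OF gh False] unfolding Hw_def .
    have cv: "convex (epigraph_e h)" using gh unfolding good_def by auto
    have key: "Hz - Hw - (z - v) \<bullet> (w - z) / lam \<le> t * (norm (w - z) ^ 2 / (2 * lam))"
      if t: "0 < t" "t \<le> 1" for t
    proof -
      define wt where "wt = (1 - t) *\<^sub>R z + t *\<^sub>R w"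
      have hwt: "h wt \<le> ereal ((1 - t) * Hz + t * Hw)"
        unfolding wt_def by (rule conv_epi[OF cv]) (use ez ew t in auto)
      have "h z + ereal (q z) \<le> h wt + ereal (q wt)" by (rule min)
      also have "\<dots> \<le> ereal ((1 - t) * Hz + t * Hw) + ereal (q wt)"
        using hwt by (rule add_right_mono)
      finally have 1: "Hz + q z \<le> (1 - t) * Hz + t * Hw + q wt" using ez by simp
      have e: "wt - v = (z - v) + t *\<^sub>R (w - z)" unfolding wt_def by (simp add: algebra_simps)
      define nz where "nz = norm (z - v) ^ 2"
      define nw where "nw = norm (w - z) ^ 2"
      define ip where "ip = (z - v) \<bullet> (w - z)"
      have 2: "q wt = (nz + 2 * t * ip + t^2 * nw) / (2 * lam)"
        unfolding q_def e nz_def nw_def ip_def by (simp add: nsq_add power_mult_distrib inner_commute)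
      have 3: "q z = nz / (2 * lam)" unfolding q_def nz_def by simp
      have 4: "(nz + 2 * t * ip + t^2 * nw) / (2 * lam) = nz / (2 * lam) + t * (ip / lam + t * (nw / (2 * lam)))"
        using lam by (simp add: field_simps power2_eq_square)
      have 5: "(1 - t) * Hz + t * Hw = Hz - t * (Hz - Hw)" by (simp add: algebra_simps)
      have "t * (Hz - Hw) \<le> t * (ip / lam + t * (nw / (2 * lam)))"
        using 1 unfolding 2 3 4 5 by linarith
      then have "Hz - Hw \<le> ip / lam + t * (nw / (2 * lam))"
        using t by simp
      then show ?thesis unfolding ip_def nw_def by simp
    qed
    have "Hz - Hw - (z - v) \<bullet> (w - z) / lam \<le> 0"
      by (rule small_le0[OF _ key]) (use lam in auto)
    moreover have "(v - z) \<bullet> (w - z) = - ((z - v) \<bullet> (w - z))" by (simp add: inner_diff_left)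
    ultimately have "Hz + (v - z) \<bullet> (w - z) / lam \<le> Hw" by simp
    then show ?thesis using ez ew unfolding z_def by simp
  qed
qed


lemma conj_lb:
  assumes "f x0 = ereal c"
  shows "ereal (x0 \<bullet> y - c) \<le> conj_fun f y"
proof -
  have "ereal (x0 \<bullet> y) - f x0 \<le> conj_fun f y"
    unfolding conj_fun_def by (rule SUP_upper) simp
  then show ?thesis using assms by simp
qed

lemma proper_finite:
  assumes "proper_fun f"
  obtains x0 c where "f x0 = ereal c"
proof -
  obtain x0 where "f x0 < \<infinity>" "f x0 \<noteq> -\<infinity>" using assms unfolding proper_fun_def by auto
  then show ?thesis using that by (cases "f x0") auto
qed

lemma epi_conj:
  assumes nm: "\<And>x. f x \<noteq> -\<infinity>"
  shows "epigraph_e (conj_fun f) =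
    (\<Inter>x\<in>{x. f x \<noteq> \<infinity>}. {p. (x, -1::real) \<bullet> p \<le> real_of_ereal (f x)})"
proof (intro set_eqI)
  fix p :: "'a \<times> real"
  obtain y r where p: "p = (y, r)" by (cases p)
  have "p \<in> epigraph_e (conj_fun f) \<longleftrightarrow> (\<forall>x. ereal (x \<bullet> y) - f x \<le> ereal r)"
    unfolding p epi_mem conj_fun_def by (simp add: SUP_le_iff)
  also have "\<dots> \<longleftrightarrow> (\<forall>x\<in>{x. f x \<noteq> \<infinity>}. (x, -1::real) \<bullet> p \<le> real_of_ereal (f x))"
  proof (intro iffI ballI allI)
    fix x assume H: "\<forall>x. ereal (x \<bullet> y) - f x \<le> ereal r" and x: "x \<in> {x. f x \<noteq> \<infinity>}"
    then obtain c where c: "f x = ereal c" using nm[of x] by (cases "f x") auto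
    show "(x, -1::real) \<bullet> p \<le> real_of_ereal (f x)" using H[rule_format, of x] c p by simp
  next
    fix x assume H: "\<forall>x\<in>{x. f x \<noteq> \<infinity>}. (x, -1::real) \<bullet> p \<le> real_of_ereal (f x)"
    show "ereal (x \<bullet> y) - f x \<le> ereal r"
    proof (cases "f x")
      case (real c)
      then show ?thesis using H[rule_format, of x] p by simp
    qed (use nm[of x] in auto)
  qed
  finally show "p \<in> epigraph_e (conj_fun f) \<longleftrightarrow> p \<in> (\<Inter>x\<in>{x. f x \<noteq> \<infinity>}. {p. (x, -1::real) \<bullet> p \<le> real_of_ereal (f x)})"
    by simp
qed

lemma conj_some_finite:
  fixes f :: "'b::euclidean_space \<Rightarrow> ereal"
  assumes pf: "proper_fun f" and cf: "convex_fun f" and clf: "closed_fun f"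
  shows "\<exists>y. conj_fun f y \<noteq> \<infinity>"
proof -
  obtain y0 c0 where y0: "f y0 = ereal c0" using proper_finite[OF pf] by blast
  have nin: "(y0, c0 - 1) \<notin> epigraph_e f" using y0 by simp
  obtain a b where ab: "a \<bullet> (y0, c0 - 1) < b" "\<forall>p\<in>epigraph_e f. a \<bullet> p > b"
    using separating_hyperplane_closed_point[OF cf[unfolded convex_fun_def] clf[unfolded closed_fun_def] nin]
    by blast
  obtain a1 a2 where a: "a = (a1, a2)" by (cases a)
  have "(y0, c0) \<in> epigraph_e f" using y0 by simp
  then have "a \<bullet> (y0, c0) > b" using ab(2) by blast
  then have "a1 \<bullet> y0 + a2 * c0 > b" using a by simp
  moreover have "a1 \<bullet> y0 + a2 * (c0 - 1) < b" using ab(1) a by simp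
  ultimately have a2: "a2 > 0" by (simp add: algebra_simps)
  have "conj_fun f (- (1 / a2) *\<^sub>R a1) \<le> ereal (- b / a2)"
    unfolding conj_fun_def
  proof (rule SUP_least)
    fix x assume "x \<in> (UNIV :: 'b set)"
    show "ereal (x \<bullet> (- (1 / a2) *\<^sub>R a1)) - f x \<le> ereal (- b / a2)"
    proof (cases "f x")
      case (real c)
      then have "(x, c) \<in> epigraph_e f" by simp
      then have "a \<bullet> (x, c) > b" using ab(2) by blast
      then have "a1 \<bullet> x + a2 * c > b" using a by simp
      moreover have "x \<bullet> (- (1 / a2) *\<^sub>R a1) - c - (- b / a2) = (b - (a1 \<bullet> x + a2 * c)) / a2"
        using a2 by (simp add: field_simps inner_commute)
      ultimately have "x \<bullet> (- (1 / a2) *\<^sub>R a1) - c - (- b / a2) \<le> 0"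
        using a2 by (simp add: divide_nonpos_pos)
      then have "x \<bullet> (- (1 / a2) *\<^sub>R a1) - c \<le> - b / a2" by simp
      then show ?thesis using real by simp
    next
      case PInf then show ?thesis by simp
    next
      case MInf then show ?thesis using pf unfolding proper_fun_def by auto
    qed
  qed
  then have "conj_fun f (- (1 / a2) *\<^sub>R a1) \<noteq> \<infinity>" by (metis ereal_infty_less_eq(1) ereal_less_eq(3) PInfty_neq_ereal(1))
  then show ?thesis by blast
qed

lemma good_conj:
  fixes f :: "'b::euclidean_space \<Rightarrow> ereal"
  assumes pf: "proper_fun f" and cf: "convex_fun f" and clf: "closed_fun f"
  shows "good (conj_fun f)"
proof -
  obtain x0 c where x0: "f x0 = ereal c" using proper_finite[OF pf] by blast
  have nm: "\<And>x. f x \<noteq> -\<infinity>" using pf unfolding proper_fun_def by auto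
  have lb: "ereal (x0 \<bullet> y + (- c)) \<le> conj_fun f y" for y using conj_lb[of f x0 c y] x0 by simp
  have "conj_fun f y \<noteq> -\<infinity>" for y using lb[of y] by auto
  moreover have "convex (epigraph_e (conj_fun f))"
    unfolding epi_conj[OF nm] by (intro convex_INT convex_halfspace_le)
  moreover have "closed (epigraph_e (conj_fun f))"
    unfolding epi_conj[OF nm] by (intro closed_INT ballI closed_halfspace_le)
  ultimately show ?thesis unfolding good_def using lb conj_some_finite[OF assms] by blast
qed

definition sp :: "('a::euclidean_space \<Rightarrow> ereal) \<Rightarrow> ('b::euclidean_space \<Rightarrow> ereal) \<Rightarrow> ('a \<Rightarrow> 'b) \<Rightarrow> 'a \<Rightarrow> 'b \<Rightarrow> bool" where
  "sp g fs K xh yh \<longleftrightarrow> g xh \<noteq> \<infinity> \<and> fs yh \<noteq> \<infinity>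
     \<and> (\<forall>x. ereal (real_of_ereal (g xh) - K (x - xh) \<bullet> yh) \<le> g x)
     \<and> (\<forall>y. ereal (real_of_ereal (fs yh) + K xh \<bullet> (y - yh)) \<le> fs y)"

lemma saddle_iff_sp:
  fixes g :: "'a::euclidean_space \<Rightarrow> ereal" and fs :: "'b::euclidean_space \<Rightarrow> ereal"
  assumes gm: "\<And>x. g x \<noteq> -\<infinity>" and gf: "\<exists>x. g x \<noteq> \<infinity>"
    and fm: "\<And>y. fs y \<noteq> -\<infinity>" and ff: "\<exists>y. fs y \<noteq> \<infinity>" and K: "linear K"
  shows "saddle_point (\<lambda>x y. g x + ereal (K x \<bullet> y) - fs y) xh yh \<longleftrightarrow> sp g fs K xh yh"
proof
  let ?L = "\<lambda>x y. g x + ereal (K x \<bullet> y) - fs y"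
  have Kd: "K (u - v) = K u - K v" for u v using K by (simp add: linear_diff)
  assume S: "saddle_point ?L xh yh"
  then have S1: "?L xh y \<le> ?L xh yh" and S2: "?L xh yh \<le> ?L x yh" for x y
    unfolding saddle_point_def by auto
  obtain x0 where x0: "g x0 \<noteq> \<infinity>" using gf by auto
  obtain y0 where y0: "fs y0 \<noteq> \<infinity>" using ff by auto
  have gxh: "g xh \<noteq> \<infinity>"
  proof
    assume "g xh = \<infinity>"
    then have "?L xh yh = \<infinity>" by simp
    with S2[of x0] have "?L x0 yh = \<infinity>" by simp
    then show False using x0 gm[of x0] fm[of yh] by (cases "g x0"; cases "fs yh") auto
  qed
  then obtain G where G: "g xh = ereal G" using gm[of xh] by (cases "g xh") auto
  have fyh: "fs yh \<noteq> \<infinity>"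
  proof
    assume "fs yh = \<infinity>"
    then have "?L xh yh = -\<infinity>" using G by simp
    with S1[of y0] have "?L xh y0 = -\<infinity>" by simp
    then show False using y0 fm[of y0] G by (cases "fs y0") auto
  qed
  then obtain F where F: "fs yh = ereal F" using fm[of yh] by (cases "fs yh") auto
  have i1: "ereal (real_of_ereal (g xh) - K (x - xh) \<bullet> yh) \<le> g x" for x
  proof (cases "g x")
    case (real Gx)
    have "?L xh yh \<le> ?L x yh" by (rule S2)
    then have "G + K xh \<bullet> yh - F \<le> Gx + K x \<bullet> yh - F" using G F real by simp
    then show ?thesis using G real by (simp add: Kd inner_diff_left)
  qed (use gm in auto)
  have i2: "ereal (real_of_ereal (fs yh) + K xh \<bullet> (y - yh)) \<le> fs y" for y
  proof (cases "fs y")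
    case (real Fy)
    have "?L xh y \<le> ?L xh yh" by (rule S1)
    then have "G + K xh \<bullet> y - Fy \<le> G + K xh \<bullet> yh - F" using G F real by simp
    then show ?thesis using F real by (simp add: inner_diff_right)
  qed (use fm in auto)
  show "sp g fs K xh yh" unfolding sp_def using gxh fyh i1 i2 by blast
next
  let ?L = "\<lambda>x y. g x + ereal (K x \<bullet> y) - fs y"
  have Kd: "K (u - v) = K u - K v" for u v using K by (simp add: linear_diff)
  assume P: "sp g fs K xh yh"
  then obtain G F where G: "g xh = ereal G" and F: "fs yh = ereal F"
    and i1: "\<And>x. ereal (G - K (x - xh) \<bullet> yh) \<le> g x"
    and i2: "\<And>y. ereal (F + K xh \<bullet> (y - yh)) \<le> fs y"
    unfolding sp_def using gm fm by (cases "g xh"; cases "fs yh") auto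
  show "saddle_point ?L xh yh" unfolding saddle_point_def
  proof (intro allI conjI)
    fix x y
    show "?L xh y \<le> ?L xh yh"
    proof (cases "fs y")
      case (real Fy)
      then have "F + K xh \<bullet> (y - yh) \<le> Fy" using i2[of y] by simp
      then show ?thesis using G F real by (simp add: inner_diff_right)
    qed (use fm G in auto)
    show "?L xh yh \<le> ?L x yh"
    proof (cases "g x")
      case (real Gx)
      then have "G - K (x - xh) \<bullet> yh \<le> Gx" using i1[of x] by simp
      then show ?thesis using G F real by (simp add: Kd inner_diff_left)
    qed (use gm F in auto)
  qed
qed

lemma saddle_prod:
  assumes "saddle_point L x1 y1" "saddle_point L x2 y2"
  shows "saddle_point L x1 y2"
proof -
  have e: "L x1 y2 = L x1 y1" "L x2 y2 = L x1 y1"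
    using assms unfolding saddle_point_def by (metis order_antisym order_trans)+
  show ?thesis using assms unfolding saddle_point_def e by (metis e(2))
qed


lemma polar:
  fixes md u p :: "'a::real_inner"
  shows "2 * ((md - u) \<bullet> (p - u)) = norm (u - md)^2 + norm (u - p)^2 - norm (md - p)^2"
proof -
  have "md - p = (md - u) - (p - u)" by simp
  then have "norm (md - p)^2 = norm (md - u)^2 - 2 * ((md - u) \<bullet> (p - u)) + norm (p - u)^2"
    by (simp only: nsq_diff)
  moreover have "norm (u - md) = norm (md - u)" "norm (u - p) = norm (p - u)" by (simp_all add: norm_minus_commute)
  ultimately show ?thesis by simp
qed

lemma convcomb:
  fixes A B :: "'a::real_inner"
  shows "norm ((1 - c) *\<^sub>R A + c *\<^sub>R B)^2 = (1 - c) * norm A^2 + c * norm B^2 - c * (1 - c) * norm (A - B)^2"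
proof -
  define M where "M = norm ((1 - c) *\<^sub>R A + c *\<^sub>R B)^2"
  define NA where "NA = norm A^2"
  define NB where "NB = norm B^2"
  define ND where "ND = norm (A - B)^2"
  define I where "I = A \<bullet> B"
  have 1: "M = (1 - c)^2 * NA + 2 * ((1 - c) * c * I) + c^2 * NB"
    unfolding M_def NA_def NB_def I_def
    by (simp only: nsq_add nsq_scale inner_scaleR_left inner_scaleR_right mult.assoc mult.left_commute)
  have 2: "ND = NA - 2 * I + NB" unfolding ND_def NA_def NB_def I_def by (rule nsq_diff)
  have "M = (1 - c) * NA + c * NB - c * (1 - c) * ND"
    unfolding 1 2 by (simp add: algebra_simps power2_eq_square)
  then show ?thesis unfolding M_def NA_def NB_def ND_def .
qed

lemma mom:
  fixes u0 u1 ag0 ag1 md p :: "'a::real_inner"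
  assumes ag: "ag1 = (1 - c) *\<^sub>R ag0 + c *\<^sub>R u0" and md: "md = (1 - c) *\<^sub>R u0 + c *\<^sub>R ag1"
  shows "2 * ((md - u1) \<bullet> (p - u1)) = (norm (u1 - md)^2 + c * (1 - c) * norm (u0 - ag1)^2)
     + (norm (u1 - p)^2 - norm (u0 - p)^2) + (1 - c) * (norm (ag1 - p)^2 - norm (ag0 - p)^2)
     + c * (1 - c) * norm (ag0 - u0)^2"
proof -
  have e1: "md - p = (1 - c) *\<^sub>R (u0 - p) + c *\<^sub>R (ag1 - p)" unfolding md by (simp add: algebra_simps)
  have e2: "ag1 - p = (1 - c) *\<^sub>R (ag0 - p) + c *\<^sub>R (u0 - p)" unfolding ag by (simp add: algebra_simps)
  have n1: "norm (md - p)^2 = (1 - c) * norm (u0 - p)^2 + c * norm (ag1 - p)^2 - c * (1 - c) * norm (u0 - ag1)^2"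
    unfolding e1 convcomb by simp
  have n2: "norm (ag1 - p)^2 = (1 - c) * norm (ag0 - p)^2 + c * norm (u0 - p)^2 - c * (1 - c) * norm (ag0 - u0)^2"
    unfolding e2 convcomb by simp
  define X where "X = norm (u0 - p)^2"
  define Y where "Y = norm (ag0 - p)^2"
  define Z where "Z = norm (ag1 - p)^2"
  have n2': "Z = (1 - c) * Y + c * X - c * (1 - c) * norm (ag0 - u0)^2" using n2 unfolding X_def Y_def Z_def .
  show ?thesis unfolding polar n1 X_def[symmetric] Y_def[symmetric] Z_def[symmetric]
    using n2' by (simp add: algebra_simps)
qed

lemma Qlb:
  fixes u0 u1 ag1 md :: "'a::real_inner"
  assumes md: "md = (1 - c) *\<^sub>R u0 + c *\<^sub>R ag1" and c: "0 \<le> c"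
  shows "(1 - c) * norm (u1 - u0)^2 \<le> norm (u1 - md)^2 + c * (1 - c) * norm (u0 - ag1)^2"
proof -
  define s where "s = u1 - md"
  define t where "t = ag1 - u0"
  have e: "u1 - u0 = s + c *\<^sub>R t" unfolding s_def t_def md by (simp add: algebra_simps)
  have n: "norm (u0 - ag1) = norm t" unfolding t_def by (simp add: norm_minus_commute)
  define S where "S = norm s^2"
  define T where "T = norm t^2"
  define I where "I = s \<bullet> t"
  have 1: "norm (s + c *\<^sub>R t)^2 = S + 2 * (c * I) + c^2 * T"
    unfolding S_def T_def I_def by (simp only: nsq_add nsq_scale inner_scaleR_right)
  have 2: "norm (s - (1 - c) *\<^sub>R t)^2 = S - 2 * ((1 - c) * I) + (1 - c)^2 * T"
    unfolding S_def T_def I_def by (simp only: nsq_diff nsq_scale inner_scaleR_right)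
  have id: "norm s^2 + c * (1 - c) * norm t^2 - (1 - c) * norm (s + c *\<^sub>R t)^2
      = c * norm (s - (1 - c) *\<^sub>R t)^2"
    unfolding 1 2 S_def[symmetric] T_def[symmetric] by (simp add: algebra_simps power2_eq_square)
  have "0 \<le> c * norm (s - (1 - c) *\<^sub>R t)^2" using c by simp
  then show ?thesis unfolding e s_def[symmetric] n using id by simp
qed


lemma L0:
  fixes u t e :: "nat \<Rightarrow> real"
  assumes u0: "\<And>n. 0 \<le> u n" and t01: "\<And>n. 0 \<le> t n" "\<And>n. t n \<le> 1"
    and ns: "\<not> summable t" and e: "e \<longlonglongrightarrow> 0"
    and rec: "\<And>n. u (Suc n) \<le> (1 - t (Suc n)) * u n + t (Suc n) * e n"
  shows "u \<longlonglongrightarrow> 0"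
proof (rule LIMSEQ_I)
  fix \<epsilon> :: real assume ep: "0 < \<epsilon>"
  obtain N where N: "\<And>n. n \<ge> N \<Longrightarrow> norm (e n) < \<epsilon> / 2"
    using LIMSEQ_D[OF e, of "\<epsilon> / 2"] ep by auto
  define v where "v n = max (u n - \<epsilon> / 2) 0" for n
  define P where "P n = (\<Sum>i<n. t i)" for n
  have v0: "0 \<le> v n" for n unfolding v_def by simp
  have vstep: "v (Suc n) \<le> (1 - t (Suc n)) * v n" if "n \<ge> N" for n
  proof -
    have en: "e n \<le> \<epsilon> / 2" using N[OF that] by simp
    have "u (Suc n) - \<epsilon> / 2 \<le> (1 - t (Suc n)) * (u n - \<epsilon> / 2)"
    proof -
      have "t (Suc n) * e n \<le> t (Suc n) * (\<epsilon> / 2)" by (rule mult_left_mono[OF en t01(1)])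
      moreover have "(1 - t (Suc n)) * (u n - \<epsilon> / 2) = (1 - t (Suc n)) * u n - \<epsilon> / 2 + t (Suc n) * (\<epsilon> / 2)"
        by (simp add: algebra_simps field_simps)
      ultimately show ?thesis using rec[of n] by linarith
    qed
    also have "\<dots> \<le> (1 - t (Suc n)) * v n" unfolding v_def
      using t01[of "Suc n"] by (intro mult_left_mono) auto
    finally show ?thesis unfolding v_def using t01[of "Suc n"] v0[of n, unfolded v_def]
      by (simp add: mult_nonneg_nonneg)
  qed
  have vbound: "v n \<le> v N * exp (- (P (Suc n) - P (Suc N)))" if "n \<ge> N" for n
    using that
  proof (induction n rule: dec_induct)
    case base then show ?case by simp
  next
    case (step n)
    have "v (Suc n) \<le> (1 - t (Suc n)) * v n" by (rule vstep[OF step(1)])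
    also have "\<dots> \<le> exp (- t (Suc n)) * v n"
      using exp_ge_add_one_self[of "- t (Suc n)"] v0[of n] by (intro mult_right_mono) auto
    also have "\<dots> \<le> exp (- t (Suc n)) * (v N * exp (- (P (Suc n) - P (Suc N))))"
      using step(3) by (intro mult_left_mono) auto
    also have "\<dots> = v N * exp (- (P (Suc (Suc n)) - P (Suc N)))"
      unfolding P_def by (simp add: exp_add[symmetric] algebra_simps)
    finally show ?case .
  qed
  define R where "R = ln (2 * (v N + 1) / \<epsilon>)"
  obtain n0 where n0: "P n0 > R + P (Suc N)"
  proof (rule ccontr)
    assume "\<not> thesis"
    then have "\<And>n. P n \<le> R + P (Suc N)" using that by (meson not_le)
    then have "summable t" unfolding P_def by (intro summableI_nonneg_bounded[OF t01(1)])
    then show False using ns by simp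
  qed
  show "\<exists>no. \<forall>n\<ge>no. norm (u n - 0) < \<epsilon>"
  proof (intro exI allI impI)
    fix n assume n: "n \<ge> max N n0"
    have "P n0 \<le> P (Suc n)" unfolding P_def using n t01(1)
      by (intro sum_mono2) auto
    then have "- (P (Suc n) - P (Suc N)) \<le> - R" using n0 by simp
    then have "exp (- (P (Suc n) - P (Suc N))) \<le> exp (- R)" by simp
    then have "v n \<le> v N * exp (- R)" using vbound[of n] n v0[of N]
      by (meson max.boundedE mult_left_mono order_trans)
    also have "exp (- R) = \<epsilon> / (2 * (v N + 1))"
      unfolding R_def using ep v0[of N] by (simp add: exp_minus exp_ln)
    also have "v N * (\<epsilon> / (2 * (v N + 1))) < \<epsilon> / 2"
      using ep v0[of N] by (simp add: field_simps)
    finally have "v n < \<epsilon> / 2" .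
    moreover have "u n - \<epsilon> / 2 \<le> v n" unfolding v_def by simp
    ultimately show "norm (u n - 0) < \<epsilon>" using u0[of n] ep by simp
  qed
qed

lemma SL:
  fixes \<alpha> \<beta> c :: "nat \<Rightarrow> real"
  assumes c01: "\<And>k. k \<ge> 1 \<Longrightarrow> 0 < c k \<and> c k < 1"
    and cmono: "\<And>k. k \<ge> 1 \<Longrightarrow> c (Suc k) \<le> c k"
    and rec: "\<And>k. k \<ge> 1 \<Longrightarrow> \<beta> (Suc k) = (1 - c (Suc k)) * \<beta> k + c (Suc k) * \<alpha> k"
    and ab: "\<And>k. \<bar>\<alpha> k\<bar> \<le> M"
    and lim: "(\<lambda>k. \<alpha> k + (1 - c k) * \<beta> k) \<longlonglongrightarrow> \<phi>"
  shows "convergent \<alpha>"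
proof -
  define M' where "M' = max \<bar>\<beta> 1\<bar> M"
  have bb: "\<bar>\<beta> k\<bar> \<le> M'" if "k \<ge> 1" for k
    using that
  proof (induction k rule: dec_induct)
    case base then show ?case unfolding M'_def by simp
  next
    case (step k)
    have ck: "0 < c (Suc k)" "c (Suc k) < 1" using c01[of "Suc k"] by auto
    have "\<bar>\<beta> (Suc k)\<bar> \<le> (1 - c (Suc k)) * \<bar>\<beta> k\<bar> + c (Suc k) * \<bar>\<alpha> k\<bar>"
    proof -
      have "\<bar>(1 - c (Suc k)) * \<beta> k + c (Suc k) * \<alpha> k\<bar> \<le> \<bar>(1 - c (Suc k)) * \<beta> k\<bar> + \<bar>c (Suc k) * \<alpha> k\<bar>"
        by (rule abs_triangle_ineq)
      also have "\<dots> = (1 - c (Suc k)) * \<bar>\<beta> k\<bar> + c (Suc k) * \<bar>\<alpha> k\<bar>" using ck by (simp add: abs_mult)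
      finally show ?thesis unfolding rec[OF step(1)] .
    qed
    also have "\<dots> \<le> (1 - c (Suc k)) * M' + c (Suc k) * M'"
      using ck step(3) ab[of k] unfolding M'_def
      by (intro add_mono mult_left_mono) auto
    finally show ?case by (simp add: algebra_simps)
  qed
  have M'0: "0 \<le> M'" unfolding M'_def by simp
  obtain cl0 where cl: "(\<lambda>n. c (Suc n)) \<longlonglongrightarrow> cl0" "\<forall>n. cl0 \<le> c (Suc n)"
  proof (rule decseq_convergent[of "\<lambda>n. c (Suc n)" 0])
    show "decseq (\<lambda>n. c (Suc n))" by (intro decseq_SucI) (use cmono in auto)
    show "\<forall>i. 0 \<le> c (Suc i)" using c01 by (auto simp: less_imp_le)
  qed
  then have cl': "c \<longlonglongrightarrow> cl0" by (simp add: filterlim_sequentially_Suc)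
  have cinf: "0 \<le> cl0" "cl0 \<le> 1"
  proof -
    have "\<forall>n\<ge>0. 0 \<le> c (Suc n) \<and> c (Suc n) \<le> 1" using c01 by (simp add: less_imp_le)
    then show "0 \<le> cl0" "cl0 \<le> 1"
      by (auto intro!: LIMSEQ_le_const[OF cl(1)] LIMSEQ_le_const2[OF cl(1)])
  qed
  have conv_from_beta: "convergent \<alpha>" if bc: "\<beta> \<longlonglongrightarrow> b0" for b0
  proof -
    have "(\<lambda>k. (\<alpha> k + (1 - c k) * \<beta> k) - (1 - c k) * \<beta> k) \<longlonglongrightarrow> \<phi> - (1 - cl0) * b0"
      by (intro tendsto_intros lim cl' bc)
    then show ?thesis by (auto simp: convergent_def)
  qed
  show ?thesis
  proof (cases "summable c")
    case True
    define B where "B n = \<beta> (Suc n)" for n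
    have dB: "B (Suc n) - B n = c (Suc (Suc n)) * (\<alpha> (Suc n) - \<beta> (Suc n))" for n
      unfolding B_def using rec[of "Suc n"] by (simp add: algebra_simps)
    have "summable (\<lambda>n. c (Suc n))" using True summable_Suc_iff[of c] by simp
    then have "summable (\<lambda>n. c (Suc (Suc n)))" using summable_Suc_iff[of "\<lambda>n. c (Suc n)"] by simp
    then have s2: "summable (\<lambda>n. c (Suc (Suc n)) * (M + M'))" by (rule summable_mult2)
    have "summable (\<lambda>n. B (Suc n) - B n)"
    proof (rule summable_comparison_test'[OF s2])
      fix n
      have "\<bar>\<alpha> (Suc n) - \<beta> (Suc n)\<bar> \<le> M + M'" using ab[of "Suc n"] bb[of "Suc n"] by simp
      then show "norm (B (Suc n) - B n) \<le> c (Suc (Suc n)) * (M + M')"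
        unfolding dB using c01[of "Suc (Suc n)"] by (simp add: abs_mult mult_left_mono)
    qed
    then have "(\<lambda>n. \<Sum>i<n. B (Suc i) - B i) \<longlonglongrightarrow> (\<Sum>i. B (Suc i) - B i)" by (rule summable_LIMSEQ)
    then have "(\<lambda>n. B n - B 0) \<longlonglongrightarrow> (\<Sum>i. B (Suc i) - B i)" by (simp add: sum_lessThan_telescope)
    then have "(\<lambda>n. (B n - B 0) + B 0) \<longlonglongrightarrow> (\<Sum>i. B (Suc i) - B i) + B 0" by (intro tendsto_intros)
    then have "(\<lambda>n. \<beta> (Suc n)) \<longlonglongrightarrow> (\<Sum>i. B (Suc i) - B i) + B 0" unfolding B_def by simp
    then have "\<beta> \<longlonglongrightarrow> (\<Sum>i. B (Suc i) - B i) + B 0" by (simp add: filterlim_sequentially_Suc)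
    then show ?thesis by (rule conv_from_beta)
  next
    case False
    define bs where "bs = \<phi> / (2 - cl0)"
    have bs: "\<phi> = (2 - cl0) * bs" unfolding bs_def using cinf by simp
    define \<eta> where "\<eta> k = (\<alpha> k + (1 - c k) * \<beta> k - \<phi>) + (c k - cl0) * bs" for k
    have eta0: "\<eta> \<longlonglongrightarrow> 0"
    proof -
      have "\<eta> \<longlonglongrightarrow> (\<phi> - \<phi>) + (cl0 - cl0) * bs" unfolding \<eta>_def by (intro tendsto_intros lim cl')
      then show ?thesis by simp
    qed
    have step: "\<bar>\<beta> (Suc k) - bs\<bar> \<le> (1 - c (Suc k)) * \<bar>\<beta> k - bs\<bar> + c (Suc k) * \<bar>\<eta> k\<bar>" if k: "k \<ge> 1" for k
    proof -
      have ck: "0 < c (Suc k)" "c (Suc k) < 1" "c (Suc k) \<le> c k" "0 < c k" "c k < 1"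
        using c01[of "Suc k"] c01[OF k] cmono[OF k] by auto
      define f where "f = 1 - c (Suc k) * (2 - c k)"
      have eq: "\<beta> (Suc k) - bs = f * (\<beta> k - bs) + c (Suc k) * \<eta> k"
        unfolding rec[OF k] f_def \<eta>_def bs by (simp add: algebra_simps)
      have f1: "c (Suc k) * (2 - c k) \<le> c k * (2 - c k)" using ck by (intro mult_right_mono) auto
      have f2: "c k * (2 - c k) \<le> 1"
      proof -
        have "0 \<le> (1 - c k)^2" by simp
        then show ?thesis by (simp add: power2_eq_square algebra_simps)
      qed
      have f3: "c (Suc k) \<le> c (Suc k) * (2 - c k)" using ck by (simp add: algebra_simps)
      have fpos: "0 \<le> f" and fle: "f \<le> 1 - c (Suc k)" unfolding f_def using f1 f2 f3 by auto
      have "\<bar>\<beta> (Suc k) - bs\<bar> \<le> \<bar>f * (\<beta> k - bs)\<bar> + \<bar>c (Suc k) * \<eta> k\<bar>" unfolding eq by (rule abs_triangle_ineq)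
      also have "\<dots> = f * \<bar>\<beta> k - bs\<bar> + c (Suc k) * \<bar>\<eta> k\<bar>" using fpos ck by (simp add: abs_mult)
      also have "\<dots> \<le> (1 - c (Suc k)) * \<bar>\<beta> k - bs\<bar> + c (Suc k) * \<bar>\<eta> k\<bar>"
        using fle by (intro add_right_mono mult_right_mono) auto
      finally show ?thesis .
    qed
    have "(\<lambda>n. \<bar>\<beta> (Suc n) - bs\<bar>) \<longlonglongrightarrow> 0"
    proof (rule L0[where t = "\<lambda>n. c (Suc n)" and e = "\<lambda>n. \<bar>\<eta> (Suc n)\<bar>"])
      show "0 \<le> \<bar>\<beta> (Suc n) - bs\<bar>" for n by simp
      show "0 \<le> c (Suc n)" "c (Suc n) \<le> 1" for n using c01[of "Suc n"] by auto
      show "\<not> summable (\<lambda>n. c (Suc n))" using False summable_Suc_iff[of c] by simp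
      have "(\<lambda>n. \<eta> (Suc n)) \<longlonglongrightarrow> 0" using eta0 by (simp add: filterlim_sequentially_Suc)
      then show "(\<lambda>n. \<bar>\<eta> (Suc n)\<bar>) \<longlonglongrightarrow> 0" by (simp add: tendsto_rabs_zero_iff)
      show "\<bar>\<beta> (Suc (Suc n)) - bs\<bar> \<le> (1 - c (Suc (Suc n))) * \<bar>\<beta> (Suc n) - bs\<bar> + c (Suc (Suc n)) * \<bar>\<eta> (Suc n)\<bar>" for n
        by (rule step) simp
    qed
    then have "(\<lambda>n. \<beta> (Suc n) - bs) \<longlonglongrightarrow> 0" by (simp add: tendsto_rabs_zero_iff)
    then have "(\<lambda>n. (\<beta> (Suc n) - bs) + bs) \<longlonglongrightarrow> 0 + bs" by (intro tendsto_intros)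
    then have "\<beta> \<longlonglongrightarrow> bs" by (simp add: filterlim_sequentially_Suc)
    then show ?thesis by (rule conv_from_beta)
  qed
qed


lemma crossAM:
  fixes L s t \<tau> \<sigma> :: real
  assumes "0 \<le> L" "0 \<le> s" "0 \<le> t" "0 < \<tau>" "0 < \<sigma>"
  shows "L * s * t \<le> sqrt (\<sigma> * \<tau>) * L * (s^2 / (2 * \<tau>) + t^2 / (2 * \<sigma>))"
proof -
  define p where "p = sqrt \<sigma>"
  define p2 where "p2 = sqrt \<tau>"
  have pp: "p^2 = \<sigma>" "p2^2 = \<tau>" "p > 0" "p2 > 0" unfolding p_def p2_def using assms by auto
  have r: "sqrt (\<sigma> * \<tau>) = p * p2" unfolding p_def p2_def by (simp add: real_sqrt_mult)
  have "0 \<le> (p * s - p2 * t)^2" by simp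
  then have "2 * (p * p2) * s * t \<le> p^2 * s^2 + p2^2 * t^2"
    by (simp add: power2_eq_square algebra_simps)
  then have am: "2 * (p * p2) * s * t \<le> \<sigma> * s^2 + \<tau> * t^2"
    using pp by simp
  have "s^2 / (2 * \<tau>) + t^2 / (2 * \<sigma>) = (\<sigma> * s^2 + \<tau> * t^2) / (2 * \<sigma> * \<tau>)"
    using assms by (simp add: field_simps)
  also have "\<dots> \<ge> (2 * (p * p2) * s * t) / (2 * \<sigma> * \<tau>)"
    using am assms by (intro divide_right_mono) auto
  finally have 1: "(2 * (p * p2) * s * t) / (2 * \<sigma> * \<tau>) \<le> s^2 / (2 * \<tau>) + t^2 / (2 * \<sigma>)" .
  have 2: "(p * p2) * ((2 * (p * p2) * s * t) / (2 * \<sigma> * \<tau>)) = s * t"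
  proof -
    have "(p * p2) * (p * p2) = \<sigma> * \<tau>" using pp by (simp add: power2_eq_square algebra_simps)
    then show ?thesis using assms by (simp add: field_simps)
  qed
  have "s * t \<le> (p * p2) * (s^2 / (2 * \<tau>) + t^2 / (2 * \<sigma>))"
    unfolding 2[symmetric] using 1 pp by (intro mult_left_mono) auto
  then have "L * (s * t) \<le> L * ((p * p2) * (s^2 / (2 * \<tau>) + t^2 / (2 * \<sigma>)))"
    using assms by (intro mult_left_mono) auto
  then show ?thesis unfolding r by (simp add: algebra_simps)
qed

lemma step_arith:
  fixes \<tau> \<sigma> Px Py Qx Qy A0 A1 B0 B1 C0 C1 E0 E1 a0 a1 b0 b1 ex ey D0 D1 Dy cc0 cc1 kk q :: real
  assumes tau: "0 < \<tau>" and sig: "0 < \<sigma>"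
    and mx: "2 * Px = Qx + (A1 - A0) + (1 - a1) * (B1 - B0) + ex"
    and my: "2 * Py = Qy + (C1 - C0) + (1 - b1) * (E1 - E0) + ey"
    and qx: "(1 - a1) * D1 \<le> Qx" and qy: "(1 - b1) * Dy \<le> Qy"
    and main: "Px / \<tau> + Py / \<sigma> \<le> - cc1 + cc0 + kk"
    and cross: "kk \<le> q * D0 / (2 * \<tau>) + q * Dy / (2 * \<sigma>)"
  shows "(A1 + (1 - a1) * B1 + q * D1) / (2 * \<tau>) + (C1 + (1 - b1) * E1) / (2 * \<sigma>) + cc1
      + (((1 - a1 - q) * D1 + ex) / (2 * \<tau>) + ((1 - b1 - q) * Dy + ey) / (2 * \<sigma>))
    \<le> (A0 + (1 - a0) * B0 + q * D0) / (2 * \<tau>) + (C0 + (1 - b0) * E0) / (2 * \<sigma>) + cc0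
      + (a0 - a1) * B0 / (2 * \<tau>) + (b0 - b1) * E0 / (2 * \<sigma>)"
proof -
  define Xn where "Xn = (A1 + (1 - a1) * B1 + q * D1) + ((1 - a1 - q) * D1 + ex) - (A0 + (1 - a0) * B0 + q * D0) - (a0 - a1) * B0"
  define Yn where "Yn = (C1 + (1 - b1) * E1) + ((1 - b1 - q) * Dy + ey) - (C0 + (1 - b0) * E0) - (b0 - b1) * E0"
  have hx: "Xn \<le> 2 * Px - q * D0"
  proof -
    have "Xn - (2 * Px - q * D0) = (1 - a1) * D1 - Qx" unfolding Xn_def mx by (simp add: algebra_simps)
    then show ?thesis using qx by linarith
  qed
  have hy: "Yn \<le> 2 * Py - q * Dy"
  proof -
    have "Yn - (2 * Py - q * Dy) = (1 - b1) * Dy - Qy" unfolding Yn_def my by (simp add: algebra_simps)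
    then show ?thesis using qy by linarith
  qed
  have hx': "Xn / (2 * \<tau>) \<le> Px / \<tau> - q * D0 / (2 * \<tau>)"
  proof -
    have "Xn / (2 * \<tau>) \<le> (2 * Px - q * D0) / (2 * \<tau>)" using hx tau by (intro divide_right_mono) auto
    also have "\<dots> = Px / \<tau> - q * D0 / (2 * \<tau>)" using tau by (simp add: field_simps)
    finally show ?thesis .
  qed
  have hy': "Yn / (2 * \<sigma>) \<le> Py / \<sigma> - q * Dy / (2 * \<sigma>)"
  proof -
    have "Yn / (2 * \<sigma>) \<le> (2 * Py - q * Dy) / (2 * \<sigma>)" using hy sig by (intro divide_right_mono) auto
    also have "\<dots> = Py / \<sigma> - q * Dy / (2 * \<sigma>)" using sig by (simp add: field_simps)
    finally show ?thesis .
  qed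
  have eq: "((A1 + (1 - a1) * B1 + q * D1) / (2 * \<tau>) + (C1 + (1 - b1) * E1) / (2 * \<sigma>) + cc1
      + (((1 - a1 - q) * D1 + ex) / (2 * \<tau>) + ((1 - b1 - q) * Dy + ey) / (2 * \<sigma>)))
    - ((A0 + (1 - a0) * B0 + q * D0) / (2 * \<tau>) + (C0 + (1 - b0) * E0) / (2 * \<sigma>) + cc0
      + (a0 - a1) * B0 / (2 * \<tau>) + (b0 - b1) * E0 / (2 * \<sigma>))
    = Xn / (2 * \<tau>) + Yn / (2 * \<sigma>) + cc1 - cc0"
    unfolding Xn_def Yn_def by (simp add: add_divide_distrib diff_divide_distrib)
  show ?thesis using eq hx' hy' main cross by linarith
qed


locale npda =
  fixes g :: "'a::euclidean_space \<Rightarrow> ereal" and fs :: "'b::euclidean_space \<Rightarrow> ereal"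
    and K :: "'a \<Rightarrow> 'b" and a b :: "nat \<Rightarrow> real" and \<tau> \<sigma> :: real
    and x xag xmd xbar :: "nat \<Rightarrow> 'a" and y yag ymd :: "nat \<Rightarrow> 'b"
  assumes gg: "good g" and gfs: "good fs" and K: "linear K"
    and a_range: "\<And>k. k \<ge> 1 \<Longrightarrow> 0 < a k \<and> a k < 1"
    and b_range: "\<And>k. k \<ge> 1 \<Longrightarrow> 0 < b k \<and> b k < 1"
    and a_mono: "\<And>k. k \<ge> 1 \<Longrightarrow> a (Suc k) \<le> a k"
    and b_mono: "\<And>k. k \<ge> 1 \<Longrightarrow> b (Suc k) \<le> b k"
    and tau: "\<tau> > 0" and sig: "\<sigma> > 0"
    and step_a: "\<And>k. k \<ge> 1 \<Longrightarrow> sqrt (\<sigma> * \<tau>) * onorm K < 1 - a k"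
    and step_b: "\<And>k. k \<ge> 1 \<Longrightarrow> sqrt (\<sigma> * \<tau>) * onorm K < 1 - b k"
    and upd_xag: "\<And>k. k \<ge> 1 \<Longrightarrow> xag k = (1 - a k) *\<^sub>R xag (k - 1) + a k *\<^sub>R x (k - 1)"
    and upd_yag: "\<And>k. k \<ge> 1 \<Longrightarrow> yag (k + 1) = (1 - b (k + 1)) *\<^sub>R yag k + b (k + 1) *\<^sub>R y k"
    and upd_xmd: "\<And>k. k \<ge> 1 \<Longrightarrow> xmd k = (1 - a k) *\<^sub>R x (k - 1) + a k *\<^sub>R xag k"
    and upd_ymd: "\<And>k. k \<ge> 1 \<Longrightarrow> ymd (k + 1) = (1 - b (k + 1)) *\<^sub>R y k + b (k + 1) *\<^sub>R yag (k + 1)"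
    and upd_x: "\<And>k. k \<ge> 1 \<Longrightarrow> x k = prox \<tau> g (xmd k - \<tau> *\<^sub>R adjoint K (y k))"
    and upd_xbar: "\<And>k. k \<ge> 1 \<Longrightarrow> xbar k = x k + (x k - x (k - 1))"
    and upd_y: "\<And>k. k \<ge> 1 \<Longrightarrow> y (k + 1) = prox \<sigma> fs (ymd (k + 1) + \<sigma> *\<^sub>R K (xbar k))"
begin

definition "G u = real_of_ereal (g u)"
definition "F v = real_of_ereal (fs v)"
definition "q = sqrt (\<sigma> * \<tau>) * onorm K"
definition "D k = x k - x (k - 1)"

lemma Kd: "K (u - v) = K u - K v" using K by (simp add: linear_diff)
lemma Ka: "K (u + v) = K u + K v" using K by (simp add: linear_add)
lemma Kbl: "bounded_linear K" using K by (simp add: linear_conv_bounded_linear)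
lemma Knorm: "norm (K u) \<le> onorm K * norm u" using onorm[OF Kbl] .
lemma onorm_nn: "0 \<le> onorm K" using onorm_pos_le[OF Kbl] .
lemma q_nn: "0 \<le> q" unfolding q_def using onorm_nn sig tau by (intro mult_nonneg_nonneg) auto
lemma adj: "u \<bullet> adjoint K v = K u \<bullet> v" using adjoint_works[OF K] .

lemma gG: "g u \<noteq> \<infinity> \<Longrightarrow> g u = ereal (G u)" unfolding G_def using good_real[OF gg] .
lemma fF: "fs u \<noteq> \<infinity> \<Longrightarrow> fs u = ereal (F u)" unfolding F_def using good_real[OF gfs] .

lemma px:
  assumes k: "k \<ge> 1"
  shows "g (x k) \<noteq> \<infinity>"
    and "ereal (G (x k) + (xmd k - x k) \<bullet> (w - x k) / \<tau> - K (w - x k) \<bullet> y k) \<le> g w"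
proof -
  define v where "v = xmd k - \<tau> *\<^sub>R adjoint K (y k)"
  have xk: "x k = prox \<tau> g v" unfolding v_def by (rule upd_x[OF k])
  show "g (x k) \<noteq> \<infinity>" unfolding xk by (rule prox_vi(1)[OF gg tau])
  have "ereal (real_of_ereal (g (x k)) + (v - x k) \<bullet> (w - x k) / \<tau>) \<le> g w"
    unfolding xk by (rule prox_vi(2)[OF gg tau])
  moreover have "(v - x k) \<bullet> (w - x k) / \<tau> = (xmd k - x k) \<bullet> (w - x k) / \<tau> - K (w - x k) \<bullet> y k"
  proof -
    have "v - x k = (xmd k - x k) - \<tau> *\<^sub>R adjoint K (y k)" by (simp add: v_def algebra_simps)
    then have "(v - x k) \<bullet> (w - x k) = (xmd k - x k) \<bullet> (w - x k) - \<tau> * (adjoint K (y k) \<bullet> (w - x k))"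
      by (simp only: inner_diff_left inner_scaleR_left)
    moreover have "adjoint K (y k) \<bullet> (w - x k) = K (w - x k) \<bullet> y k"
      by (subst inner_commute) (rule adj)
    ultimately show ?thesis using tau by (simp add: field_simps)
  qed
  ultimately show "ereal (G (x k) + (xmd k - x k) \<bullet> (w - x k) / \<tau> - K (w - x k) \<bullet> y k) \<le> g w"
    unfolding G_def by (simp add: add_diff_eq)
qed

lemma py:
  assumes k: "k \<ge> 1"
  shows "fs (y (k + 1)) \<noteq> \<infinity>"
    and "ereal (F (y (k + 1)) + (ymd (k + 1) - y (k + 1)) \<bullet> (w - y (k + 1)) / \<sigma> + K (xbar k) \<bullet> (w - y (k + 1))) \<le> fs w"
proof -
  define v where "v = ymd (k + 1) + \<sigma> *\<^sub>R K (xbar k)"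
  have yk: "y (k + 1) = prox \<sigma> fs v" unfolding v_def by (rule upd_y[OF k])
  show "fs (y (k + 1)) \<noteq> \<infinity>" unfolding yk by (rule prox_vi(1)[OF gfs sig])
  have "ereal (real_of_ereal (fs (y (k + 1))) + (v - y (k + 1)) \<bullet> (w - y (k + 1)) / \<sigma>) \<le> fs w"
    unfolding yk by (rule prox_vi(2)[OF gfs sig])
  moreover have "(v - y (k + 1)) \<bullet> (w - y (k + 1)) / \<sigma> = (ymd (k + 1) - y (k + 1)) \<bullet> (w - y (k + 1)) / \<sigma> + K (xbar k) \<bullet> (w - y (k + 1))"
  proof -
    have "(v - y (k + 1)) \<bullet> (w - y (k + 1)) = (ymd (k + 1) - y (k + 1)) \<bullet> (w - y (k + 1)) + \<sigma> * (K (xbar k) \<bullet> (w - y (k + 1)))"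
      unfolding v_def by (simp add: inner_diff_left inner_add_left)
    then show ?thesis using sig by (simp add: field_simps)
  qed
  ultimately show "ereal (F (y (k + 1)) + (ymd (k + 1) - y (k + 1)) \<bullet> (w - y (k + 1)) / \<sigma> + K (xbar k) \<bullet> (w - y (k + 1))) \<le> fs w"
    unfolding F_def by (simp add: add.assoc)
qed

lemma px_real:
  assumes k: "k \<ge> 1" and w: "g w \<noteq> \<infinity>"
  shows "G (x k) + (xmd k - x k) \<bullet> (w - x k) / \<tau> - K (w - x k) \<bullet> y k \<le> G w"
  using px(2)[OF k, of w] gG[OF w] by simp

lemma py_real:
  assumes k: "k \<ge> 1" and w: "fs w \<noteq> \<infinity>"
  shows "F (y (k + 1)) + (ymd (k + 1) - y (k + 1)) \<bullet> (w - y (k + 1)) / \<sigma> + K (xbar k) \<bullet> (w - y (k + 1)) \<le> F w"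
  using py(2)[OF k, of w] fF[OF w] by simp

lemma sp_real:
  assumes "sp g fs K xh yh"
  shows "g xh \<noteq> \<infinity>" "fs yh \<noteq> \<infinity>"
    and "g w \<noteq> \<infinity> \<Longrightarrow> G xh - K (w - xh) \<bullet> yh \<le> G w"
    and "fs v \<noteq> \<infinity> \<Longrightarrow> F yh + K xh \<bullet> (v - yh) \<le> F v"
proof -
  show "g xh \<noteq> \<infinity>" "fs yh \<noteq> \<infinity>" using assms unfolding sp_def by auto
  show "G xh - K (w - xh) \<bullet> yh \<le> G w" if "g w \<noteq> \<infinity>"
    using assms gG[OF that] unfolding sp_def G_def by (metis ereal_less_eq(3))
  show "F yh + K xh \<bullet> (v - yh) \<le> F v" if "fs v \<noteq> \<infinity>"
    using assms fF[OF that] unfolding sp_def F_def by (metis ereal_less_eq(3))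
qed

lemma mainineq:
  assumes S: "sp g fs K xh yh" and k: "k \<ge> 1"
  shows "(xmd (k + 1) - x (k + 1)) \<bullet> (xh - x (k + 1)) / \<tau> + (ymd (k + 1) - y (k + 1)) \<bullet> (yh - y (k + 1)) / \<sigma>
    \<le> K (x (k + 1) - xbar k) \<bullet> (yh - y (k + 1))"
proof -
  have k1: "k + 1 \<ge> 1" by simp
  have 1: "G (x (k + 1)) + (xmd (k + 1) - x (k + 1)) \<bullet> (xh - x (k + 1)) / \<tau> - K (xh - x (k + 1)) \<bullet> y (k + 1) \<le> G xh"
    by (rule px_real[OF k1 sp_real(1)[OF S]])
  have 2: "F (y (k + 1)) + (ymd (k + 1) - y (k + 1)) \<bullet> (yh - y (k + 1)) / \<sigma> + K (xbar k) \<bullet> (yh - y (k + 1)) \<le> F yh"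
    by (rule py_real[OF k sp_real(2)[OF S]])
  have 3: "G xh - K (x (k + 1) - xh) \<bullet> yh \<le> G (x (k + 1))"
    by (rule sp_real(3)[OF S px(1)[OF k1]])
  have 4: "F yh + K xh \<bullet> (y (k + 1) - yh) \<le> F (y (k + 1))"
    by (rule sp_real(4)[OF S py(1)[OF k]])
  have e: "K (x (k + 1) - xh) \<bullet> yh - K xh \<bullet> (y (k + 1) - yh) + K (xh - x (k + 1)) \<bullet> y (k + 1) - K (xbar k) \<bullet> (yh - y (k + 1))
     = K (x (k + 1) - xbar k) \<bullet> (yh - y (k + 1))"
    by (simp add: Kd inner_diff_left inner_diff_right)
  show ?thesis using 1 2 3 4 e by linarith
qed

end


context npda begin

definition "ex j = a j * (1 - a j) * norm (xag (j - 1) - x (j - 1))^2"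
definition "ey j = b j * (1 - b j) * norm (yag (j - 1) - y (j - 1))^2"
definition "W xh yh k = (norm (x k - xh)^2 + (1 - a k) * norm (xag k - xh)^2 + q * norm (D k)^2) / (2 * \<tau>)
   + (norm (y k - yh)^2 + (1 - b k) * norm (yag k - yh)^2) / (2 * \<sigma>) + K (D k) \<bullet> (y k - yh)"
definition "Rr k = ((1 - a (k + 1) - q) * norm (D (k + 1))^2 + ex (k + 1)) / (2 * \<tau>)
   + ((1 - b (k + 1) - q) * norm (y (k + 1) - y k)^2 + ey (k + 1)) / (2 * \<sigma>)"

lemma Kcross: "\<bar>K u \<bullet> v\<bar> \<le> q * (norm u^2 / (2 * \<tau>) + norm v^2 / (2 * \<sigma>))"
proof -
  have "\<bar>K u \<bullet> v\<bar> \<le> norm (K u) * norm v" by (rule Cauchy_Schwarz_ineq2)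
  also have "\<dots> \<le> onorm K * norm u * norm v" using Knorm[of u] by (intro mult_right_mono) auto
  also have "\<dots> \<le> sqrt (\<sigma> * \<tau>) * onorm K * (norm u^2 / (2 * \<tau>) + norm v^2 / (2 * \<sigma>))"
    by (rule crossAM) (use onorm_nn tau sig in auto)
  finally show ?thesis unfolding q_def .
qed

lemma Wstep:
  assumes S: "sp g fs K xh yh" and k: "k \<ge> 1"
  shows "W xh yh (k + 1) + Rr k \<le> W xh yh k + (a k - a (k + 1)) * norm (xag k - xh)^2 / (2 * \<tau>)
     + (b k - b (k + 1)) * norm (yag k - yh)^2 / (2 * \<sigma>)"
proof -
  have ag: "xag (k + 1) = (1 - a (k + 1)) *\<^sub>R xag k + a (k + 1) *\<^sub>R x k" using upd_xag[of "k + 1"] by simp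
  have md: "xmd (k + 1) = (1 - a (k + 1)) *\<^sub>R x k + a (k + 1) *\<^sub>R xag (k + 1)" using upd_xmd[of "k + 1"] by simp
  have agy: "yag (k + 1) = (1 - b (k + 1)) *\<^sub>R yag k + b (k + 1) *\<^sub>R y k" using upd_yag[OF k] .
  have mdy: "ymd (k + 1) = (1 - b (k + 1)) *\<^sub>R y k + b (k + 1) *\<^sub>R yag (k + 1)" using upd_ymd[OF k] .
  note mx = mom[OF ag md, of "x (k + 1)" xh]
  note my = mom[OF agy mdy, of "y (k + 1)" yh]
  have a1: "0 \<le> a (k + 1)" using a_range[of "k + 1"] by simp
  have b1: "0 \<le> b (k + 1)" using b_range[of "k + 1"] by simp
  note qx = Qlb[OF md a1, of "x (k + 1)"]
  note qy = Qlb[OF mdy b1, of "y (k + 1)"]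
  have xb: "x (k + 1) - xbar k = D (k + 1) - D k" unfolding D_def upd_xbar[OF k] by simp
  note main0 = mainineq[OF S k]
  have main: "(xmd (k + 1) - x (k + 1)) \<bullet> (xh - x (k + 1)) / \<tau> + (ymd (k + 1) - y (k + 1)) \<bullet> (yh - y (k + 1)) / \<sigma>
     \<le> - (K (D (k + 1)) \<bullet> (y (k + 1) - yh)) + K (D k) \<bullet> (y k - yh) + K (D k) \<bullet> (y (k + 1) - y k)"
  proof -
    have "K (x (k + 1) - xbar k) \<bullet> (yh - y (k + 1)) = - (K (D (k + 1)) \<bullet> (y (k + 1) - yh)) + K (D k) \<bullet> (y k - yh) + K (D k) \<bullet> (y (k + 1) - y k)"
      unfolding xb Kd by (simp add: inner_diff_left inner_diff_right)
    then show ?thesis using main0 by simp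
  qed
  have cross: "K (D k) \<bullet> (y (k + 1) - y k) \<le> q * norm (D k)^2 / (2 * \<tau>) + q * norm (y (k + 1) - y k)^2 / (2 * \<sigma>)"
    using Kcross[of "D k" "y (k + 1) - y k"] by (simp add: algebra_simps)
  have Dn: "norm (x (k + 1) - x k) = norm (D (k + 1))" unfolding D_def by simp
  have "W xh yh (k + 1) + Rr k = 
      (norm (x (k + 1) - xh)^2 + (1 - a (k + 1)) * norm (xag (k + 1) - xh)^2 + q * norm (x (k + 1) - x k)^2) / (2 * \<tau>)
      + (norm (y (k + 1) - yh)^2 + (1 - b (k + 1)) * norm (yag (k + 1) - yh)^2) / (2 * \<sigma>) + K (D (k + 1)) \<bullet> (y (k + 1) - yh)
      + (((1 - a (k + 1) - q) * norm (x (k + 1) - x k)^2 + a (k + 1) * (1 - a (k + 1)) * norm (xag k - x k)^2) / (2 * \<tau>)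
      + ((1 - b (k + 1) - q) * norm (y (k + 1) - y k)^2 + b (k + 1) * (1 - b (k + 1)) * norm (yag k - y k)^2) / (2 * \<sigma>))"
    unfolding W_def Rr_def ex_def ey_def Dn by simp
  also have "\<dots> \<le> (norm (x k - xh)^2 + (1 - a k) * norm (xag k - xh)^2 + q * norm (D k)^2) / (2 * \<tau>)
      + (norm (y k - yh)^2 + (1 - b k) * norm (yag k - yh)^2) / (2 * \<sigma>) + K (D k) \<bullet> (y k - yh)
      + (a k - a (k + 1)) * norm (xag k - xh)^2 / (2 * \<tau>) + (b k - b (k + 1)) * norm (yag k - yh)^2 / (2 * \<sigma>)"
    by (rule step_arith[OF tau sig mx my qx qy main cross])
  also have "\<dots> = W xh yh k + (a k - a (k + 1)) * norm (xag k - xh)^2 / (2 * \<tau>)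
     + (b k - b (k + 1)) * norm (yag k - yh)^2 / (2 * \<sigma>)"
    unfolding W_def by simp
  finally show ?thesis .
qed

end


lemma mono_conv:
  fixes c :: "nat \<Rightarrow> real"
  assumes "\<And>k. k \<ge> 1 \<Longrightarrow> 0 < c k" "\<And>k. k \<ge> 1 \<Longrightarrow> c (Suc k) \<le> c k"
  shows "\<exists>l. c \<longlonglongrightarrow> l"
proof -
  obtain l where "(\<lambda>n. c (Suc n)) \<longlonglongrightarrow> l"
  proof (rule decseq_convergent[of "\<lambda>n. c (Suc n)" 0])
    show "decseq (\<lambda>n. c (Suc n))" by (intro decseq_SucI) (use assms in auto)
    show "\<forall>i. 0 \<le> c (Suc i)" using assms by (auto simp: less_imp_le)
  qed
  then show ?thesis by (auto simp: filterlim_sequentially_Suc)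
qed

lemma le_first:
  fixes c :: "nat \<Rightarrow> real"
  assumes "\<And>k. k \<ge> 1 \<Longrightarrow> c (Suc k) \<le> c k" "k \<ge> 1"
  shows "c k \<le> c 1"
  using assms(2)
proof (induction k rule: dec_induct)
  case base then show ?case by simp
next
  case (step k) then show ?case using assms(1)[of k] by simp
qed

context npda begin

definition "m0 = min (1 - a 1) (1 - b 1)"
definition "eps k = ((a k - a (k + 1)) + (b k - b (k + 1))) / m0"

lemma q_lt: "q < 1 - a k" "q < 1 - b k" if "k \<ge> 1" for k
  using step_a[OF that] step_b[OF that] unfolding q_def by auto

lemma m0_pos: "0 < m0" unfolding m0_def using a_range[of 1] b_range[of 1] by simp

lemma a_le: "k \<ge> 1 \<Longrightarrow> a k \<le> a 1" by (rule le_first[of a, OF a_mono])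
lemma b_le: "k \<ge> 1 \<Longrightarrow> b k \<le> b 1" by (rule le_first[of b, OF b_mono])

lemma eps_nn: "k \<ge> 1 \<Longrightarrow> 0 \<le> eps k"
  unfolding eps_def using a_mono[of k] b_mono[of k] m0_pos by simp

lemma Wlb:
  "(norm (x k - xh)^2 + (1 - a k) * norm (xag k - xh)^2) / (2 * \<tau>)
    + ((1 - q) * norm (y k - yh)^2 + (1 - b k) * norm (yag k - yh)^2) / (2 * \<sigma>) \<le> W xh yh k"
proof -
  define A where "A = norm (x k - xh)^2"
  define B where "B = norm (xag k - xh)^2"
  define C where "C = norm (y k - yh)^2"
  define E where "E = norm (yag k - yh)^2"
  define DD where "DD = norm (D k)^2"
  define kc where "kc = K (D k) \<bullet> (y k - yh)"
  have kc: "- (q * (DD / (2 * \<tau>) + C / (2 * \<sigma>))) \<le> kc"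
    using Kcross[of "D k" "y k - yh"] unfolding kc_def DD_def C_def by (simp add: abs_le_iff)
  have e1: "W xh yh k = (A + (1 - a k) * B) / (2 * \<tau>) + ((1 - q) * C + (1 - b k) * E) / (2 * \<sigma>)
      + (q * (DD / (2 * \<tau>) + C / (2 * \<sigma>)) + kc)"
    unfolding W_def A_def B_def C_def E_def DD_def kc_def using tau sig by (simp add: field_simps)
  show ?thesis unfolding e1 A_def[symmetric] B_def[symmetric] C_def[symmetric] E_def[symmetric] using kc by linarith
qed

lemma Wparts:
  assumes k: "k \<ge> 1"
  shows "0 \<le> W xh yh k" "(1 - a k) * norm (xag k - xh)^2 / (2 * \<tau>) \<le> W xh yh k"
    "(1 - b k) * norm (yag k - yh)^2 / (2 * \<sigma>) \<le> W xh yh k"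
    "norm (x k - xh)^2 / (2 * \<tau>) \<le> W xh yh k" "(1 - q) * norm (y k - yh)^2 / (2 * \<sigma>) \<le> W xh yh k"
proof -
  have q1: "0 \<le> 1 - q" using q_lt(1)[OF k] a_range[OF k] by simp
  have a1: "0 \<le> 1 - a k" "0 \<le> 1 - b k" using a_range[OF k] b_range[OF k] by auto
  define A where "A = norm (x k - xh)^2 / (2 * \<tau>)"
  define B where "B = (1 - a k) * norm (xag k - xh)^2 / (2 * \<tau>)"
  define C where "C = (1 - q) * norm (y k - yh)^2 / (2 * \<sigma>)"
  define E where "E = (1 - b k) * norm (yag k - yh)^2 / (2 * \<sigma>)"
  have nn: "0 \<le> A" "0 \<le> B" "0 \<le> C" "0 \<le> E" unfolding A_def B_def C_def E_def using tau sig q1 a1 by auto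
  have "A + B + C + E \<le> W xh yh k"
    using Wlb[of k xh yh] unfolding A_def B_def C_def E_def by (simp add: add_divide_distrib)
  then show "0 \<le> W xh yh k" "(1 - a k) * norm (xag k - xh)^2 / (2 * \<tau>) \<le> W xh yh k"
    "(1 - b k) * norm (yag k - yh)^2 / (2 * \<sigma>) \<le> W xh yh k"
    "norm (x k - xh)^2 / (2 * \<tau>) \<le> W xh yh k" "(1 - q) * norm (y k - yh)^2 / (2 * \<sigma>) \<le> W xh yh k"
    using nn unfolding A_def B_def C_def E_def by linarith+
qed

lemma Rr_nn: "0 \<le> Rr k"
proof -
  have k1: "k + 1 \<ge> 1" by simp
  have "0 \<le> 1 - a (k + 1) - q" "0 \<le> 1 - b (k + 1) - q" using q_lt[OF k1] by auto
  moreover have "0 \<le> ex (k + 1)" "0 \<le> ey (k + 1)" unfolding ex_def ey_def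
    using a_range[OF k1] b_range[OF k1] by auto
  ultimately show ?thesis unfolding Rr_def using tau sig by (auto intro!: add_nonneg_nonneg divide_nonneg_pos)
qed

lemma Wstep2:
  assumes S: "sp g fs K xh yh" and k: "k \<ge> 1"
  shows "W xh yh (k + 1) + Rr k \<le> W xh yh k + eps k * W xh yh k"
proof -
  have m: "m0 \<le> 1 - a k" "m0 \<le> 1 - b k" unfolding m0_def using a_le[OF k] b_le[OF k] by auto
  have da: "0 \<le> a k - a (k + 1)" "0 \<le> b k - b (k + 1)" using a_mono[OF k] b_mono[OF k] by auto
  have ex1: "(a k - a (k + 1)) * norm (xag k - xh)^2 / (2 * \<tau>) \<le> (a k - a (k + 1)) / m0 * W xh yh k"
  proof -
    have "m0 * (norm (xag k - xh)^2 / (2 * \<tau>)) \<le> (1 - a k) * (norm (xag k - xh)^2 / (2 * \<tau>))"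
      using m tau by (intro mult_right_mono) auto
    also have "\<dots> \<le> W xh yh k" using Wparts(2)[OF k, where xh=xh and yh=yh] by simp
    finally have "norm (xag k - xh)^2 / (2 * \<tau>) \<le> W xh yh k / m0" using m0_pos by (simp add: field_simps)
    then have "(a k - a (k + 1)) * (norm (xag k - xh)^2 / (2 * \<tau>)) \<le> (a k - a (k + 1)) * (W xh yh k / m0)"
      using da by (intro mult_left_mono) auto
    then show ?thesis by simp
  qed
  have ey1: "(b k - b (k + 1)) * norm (yag k - yh)^2 / (2 * \<sigma>) \<le> (b k - b (k + 1)) / m0 * W xh yh k"
  proof -
    have "m0 * (norm (yag k - yh)^2 / (2 * \<sigma>)) \<le> (1 - b k) * (norm (yag k - yh)^2 / (2 * \<sigma>))"
      using m sig by (intro mult_right_mono) auto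
    also have "\<dots> \<le> W xh yh k" using Wparts(3)[OF k, where xh=xh and yh=yh] by simp
    finally have "norm (yag k - yh)^2 / (2 * \<sigma>) \<le> W xh yh k / m0" using m0_pos by (simp add: field_simps)
    then have "(b k - b (k + 1)) * (norm (yag k - yh)^2 / (2 * \<sigma>)) \<le> (b k - b (k + 1)) * (W xh yh k / m0)"
      using da by (intro mult_left_mono) auto
    then show ?thesis by simp
  qed
  have "eps k * W xh yh k = (a k - a (k + 1)) / m0 * W xh yh k + (b k - b (k + 1)) / m0 * W xh yh k"
    unfolding eps_def using m0_pos by (simp add: field_simps)
  then show ?thesis using Wstep[OF S k] ex1 ey1 by linarith
qed

definition "Mb xh yh = W xh yh 1 * exp ((a 1 + b 1) / m0)"

lemma Wbound:
  assumes S: "sp g fs K xh yh" and k: "k \<ge> 1"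
  shows "W xh yh k \<le> Mb xh yh"
proof -
  have "W xh yh k \<le> W xh yh 1 * exp ((a 1 - a k + (b 1 - b k)) / m0)"
    using k
  proof (induction k rule: dec_induct)
    case base then show ?case by simp
  next
    case (step k)
    have "W xh yh (Suc k) \<le> W xh yh k + eps k * W xh yh k"
      using Wstep2[OF S step(1)] Rr_nn[of k] by simp
    also have "\<dots> = (1 + eps k) * W xh yh k" by (simp add: algebra_simps)
    also have "\<dots> \<le> exp (eps k) * W xh yh k"
      using exp_ge_add_one_self[of "eps k"] Wparts(1)[OF step(1)] by (intro mult_right_mono) (auto simp: add.commute)
    also have "\<dots> \<le> exp (eps k) * (W xh yh 1 * exp ((a 1 - a k + (b 1 - b k)) / m0))"
      using step(3) by (intro mult_left_mono) auto
    also have "\<dots> = W xh yh 1 * exp ((a 1 - a (Suc k) + (b 1 - b (Suc k))) / m0)"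
      unfolding eps_def using m0_pos by (simp add: exp_add[symmetric] add_divide_distrib[symmetric] algebra_simps)
    finally show ?case .
  qed
  also have "\<dots> \<le> Mb xh yh" unfolding Mb_def
    using a_range[OF k] b_range[OF k] m0_pos Wparts(1)[of 1 xh yh]
    by (intro mult_left_mono) (auto simp: divide_right_mono)
  finally show ?thesis .
qed

end


lemma sq_to0:
  fixes v :: "nat \<Rightarrow> 'a::real_normed_vector"
  assumes ev: "eventually (\<lambda>k. norm (v k)^2 \<le> C * r k) sequentially" and r: "r \<longlonglongrightarrow> 0"
  shows "v \<longlonglongrightarrow> 0"
proof -
  have "(\<lambda>k. sqrt (C * r k)) \<longlonglongrightarrow> sqrt (C * 0)" by (intro tendsto_intros r)
  then have s: "(\<lambda>k. sqrt (C * r k)) \<longlonglongrightarrow> 0" by simp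
  have "(\<lambda>k. norm (v k)) \<longlonglongrightarrow> 0"
  proof (rule tendsto_sandwich[OF _ _ tendsto_const s])
    show "\<forall>\<^sub>F n in sequentially. 0 \<le> norm (v n)" by simp
    show "\<forall>\<^sub>F n in sequentially. norm (v n) \<le> sqrt (C * r n)"
      using ev by eventually_elim (rule real_le_rsqrt)
  qed
  then show ?thesis by (simp add: tendsto_norm_zero_iff)
qed

lemma bnd_range:
  fixes v :: "nat \<Rightarrow> 'a::real_normed_vector"
  assumes "\<And>k. k \<ge> 1 \<Longrightarrow> norm (v k - c)^2 \<le> R"
  shows "bounded (range v)"
proof -
  have "v k \<in> cball c (max (sqrt R) (dist c (v 0)))" for k
  proof (cases "k \<ge> 1")
    case True
    then have "norm (v k - c) \<le> sqrt R" using assms real_le_rsqrt by blast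
    then show ?thesis by (simp add: dist_norm norm_minus_commute)
  next
    case False then have "k = 0" by simp
    then show ?thesis by simp
  qed
  then show ?thesis by (intro bounded_subset[OF bounded_cball]) auto
qed

context npda begin

definition "V xh yh k = W xh yh k + Mb xh yh * (a k + b k) / m0"

lemma Mb_nn: "0 \<le> Mb xh yh" unfolding Mb_def using Wparts(1)[of 1 xh yh] by simp

lemma Vstep:
  assumes S: "sp g fs K xh yh" and k: "k \<ge> 1"
  shows "V xh yh (k + 1) + Rr k \<le> V xh yh k"
proof -
  have "eps k * W xh yh k \<le> eps k * Mb xh yh"
    using Wbound[OF S k] eps_nn[OF k] by (intro mult_left_mono) auto
  moreover have "eps k * Mb xh yh = Mb xh yh * (a k + b k) / m0 - Mb xh yh * (a (k + 1) + b (k + 1)) / m0"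
    unfolding eps_def using m0_pos by (simp add: field_simps)
  ultimately show ?thesis using Wstep2[OF S k] unfolding V_def by linarith
qed

lemma V_conv:
  assumes S: "sp g fs K xh yh"
  shows "\<exists>l. V xh yh \<longlonglongrightarrow> l"
proof -
  have Vnn: "0 \<le> V xh yh k" if "k \<ge> 1" for k
    unfolding V_def using Wparts(1)[OF that, of xh yh] Mb_nn[of xh yh] a_range[OF that] b_range[OF that] m0_pos
    by (auto intro!: add_nonneg_nonneg divide_nonneg_pos mult_nonneg_nonneg)
  obtain l where "(\<lambda>n. V xh yh (Suc n)) \<longlonglongrightarrow> l"
  proof (rule decseq_convergent[of "\<lambda>n. V xh yh (Suc n)" 0])
    show "decseq (\<lambda>n. V xh yh (Suc n))"
    proof (intro decseq_SucI)
      fix n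
      show "V xh yh (Suc (Suc n)) \<le> V xh yh (Suc n)"
        using Vstep[OF S, of "Suc n"] Rr_nn[of "Suc n"] by simp
    qed
    show "\<forall>i. 0 \<le> V xh yh (Suc i)" using Vnn by simp
  qed
  then show ?thesis by (auto simp: filterlim_sequentially_Suc)
qed

lemma a_conv: "\<exists>l. a \<longlonglongrightarrow> l" by (rule mono_conv) (use a_range a_mono in auto)
lemma b_conv: "\<exists>l. b \<longlonglongrightarrow> l" by (rule mono_conv) (use b_range b_mono in auto)

lemma W_conv:
  assumes S: "sp g fs K xh yh"
  shows "convergent (W xh yh)"
proof -
  obtain l where l: "V xh yh \<longlonglongrightarrow> l" using V_conv[OF S] by blast
  obtain la where la: "a \<longlonglongrightarrow> la" using a_conv by blast
  obtain lb where lb: "b \<longlonglongrightarrow> lb" using b_conv by blast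
  have "(\<lambda>k. V xh yh k - Mb xh yh * (a k + b k) / m0) \<longlonglongrightarrow> l - Mb xh yh * (la + lb) / m0"
    by (intro tendsto_intros l la lb) (use m0_pos in simp)
  moreover have "(\<lambda>k. V xh yh k - Mb xh yh * (a k + b k) / m0) = W xh yh" unfolding V_def by auto
  ultimately show ?thesis by (auto simp: convergent_def)
qed

lemma Rr_lim:
  assumes S: "sp g fs K xh yh"
  shows "Rr \<longlonglongrightarrow> 0"
proof -
  obtain l where l: "V xh yh \<longlonglongrightarrow> l" using V_conv[OF S] by blast
  have "(\<lambda>k. V xh yh k - V xh yh (Suc k)) \<longlonglongrightarrow> l - l" by (intro tendsto_intros l LIMSEQ_Suc)
  then have d: "(\<lambda>k. V xh yh k - V xh yh (Suc k)) \<longlonglongrightarrow> 0" by simp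
  show ?thesis
  proof (rule tendsto_sandwich[OF _ _ tendsto_const d])
    show "\<forall>\<^sub>F n in sequentially. 0 \<le> Rr n" by (simp add: Rr_nn)
    show "\<forall>\<^sub>F n in sequentially. Rr n \<le> V xh yh n - V xh yh (Suc n)"
      unfolding eventually_sequentially using Vstep[OF S] by (intro exI[of _ 1]) force
  qed
qed

lemma x_bounded:
  assumes S: "sp g fs K xh yh"
  shows "bounded (range x)"
proof (rule bnd_range[where c = xh and R = "2 * \<tau> * Mb xh yh"])
  fix k :: nat assume k: "k \<ge> 1"
  have "norm (x k - xh)^2 / (2 * \<tau>) \<le> Mb xh yh" using Wparts(4)[OF k] Wbound[OF S k] by (rule order_trans)
  then show "norm (x k - xh)^2 \<le> 2 * \<tau> * Mb xh yh" using tau by (simp add: field_simps)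
qed

lemma y_bounded:
  assumes S: "sp g fs K xh yh"
  shows "bounded (range y)"
proof (rule bnd_range[where c = yh and R = "2 * \<sigma> * Mb xh yh / (1 - q)"])
  fix k :: nat assume k: "k \<ge> 1"
  have q1: "0 < 1 - q" using q_lt(1)[OF k] a_range[OF k] by simp
  have "(1 - q) * norm (y k - yh)^2 / (2 * \<sigma>) \<le> Mb xh yh" using Wparts(5)[OF k] Wbound[OF S k] by (rule order_trans)
  then show "norm (y k - yh)^2 \<le> 2 * \<sigma> * Mb xh yh / (1 - q)" using sig q1 by (simp add: field_simps)
qed

definition "mua = min (1 - a 1 - q) (1 - b 1 - q)"

lemma mua_pos: "0 < mua" unfolding mua_def using q_lt[of 1] by simp

lemma Rr_parts:
  shows "mua * norm (D (k + 1))^2 / (2 * \<tau>) \<le> Rr k" "mua * norm (y (k + 1) - y k)^2 / (2 * \<sigma>) \<le> Rr k"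
    "ex (k + 1) / (2 * \<tau>) \<le> Rr k" "ey (k + 1) / (2 * \<sigma>) \<le> Rr k"
proof -
  have k1: "k + 1 \<ge> 1" by simp
  have m: "mua \<le> 1 - a (k + 1) - q" "mua \<le> 1 - b (k + 1) - q"
    unfolding mua_def using a_le[OF k1] b_le[OF k1] by auto
  have ee: "0 \<le> ex (k + 1)" "0 \<le> ey (k + 1)" unfolding ex_def ey_def
    using a_range[OF k1] b_range[OF k1] by auto
  define P1 where "P1 = (1 - a (k + 1) - q) * norm (D (k + 1))^2 / (2 * \<tau>)"
  define P2 where "P2 = ex (k + 1) / (2 * \<tau>)"
  define P3 where "P3 = (1 - b (k + 1) - q) * norm (y (k + 1) - y k)^2 / (2 * \<sigma>)"
  define P4 where "P4 = ey (k + 1) / (2 * \<sigma>)"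
  have R: "Rr k = P1 + P2 + P3 + P4" unfolding Rr_def P1_def P2_def P3_def P4_def by (simp add: add_divide_distrib)
  have m1: "mua * norm (D (k + 1))^2 / (2 * \<tau>) \<le> P1" unfolding P1_def using m tau
    by (intro divide_right_mono mult_right_mono) auto
  have m2: "mua * norm (y (k + 1) - y k)^2 / (2 * \<sigma>) \<le> P3" unfolding P3_def using m sig
    by (intro divide_right_mono mult_right_mono) auto
  have nn: "0 \<le> P1" "0 \<le> P2" "0 \<le> P3" "0 \<le> P4"
    unfolding P1_def P2_def P3_def P4_def using tau sig ee q_lt[OF k1] by auto
  show "mua * norm (D (k + 1))^2 / (2 * \<tau>) \<le> Rr k" "mua * norm (y (k + 1) - y k)^2 / (2 * \<sigma>) \<le> Rr k"
    "ex (k + 1) / (2 * \<tau>) \<le> Rr k" "ey (k + 1) / (2 * \<sigma>) \<le> Rr k"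
    using R m1 m2 nn unfolding P2_def[symmetric] P4_def[symmetric] by linarith+
qed

end


context npda begin

lemma D_lim:
  assumes S: "sp g fs K xh yh"
  shows "D \<longlonglongrightarrow> 0"
proof -
  have "(\<lambda>k. D (Suc k)) \<longlonglongrightarrow> 0"
  proof (rule sq_to0[where C = "2 * \<tau> / mua" and r = Rr])
    show "Rr \<longlonglongrightarrow> 0" by (rule Rr_lim[OF S])
    show "\<forall>\<^sub>F k in sequentially. norm (D (Suc k))^2 \<le> 2 * \<tau> / mua * Rr k"
    proof (intro always_eventually allI)
      fix k
      have "mua * norm (D (k + 1))^2 / (2 * \<tau>) \<le> Rr k" by (rule Rr_parts(1))
      then show "norm (D (Suc k))^2 \<le> 2 * \<tau> / mua * Rr k" using mua_pos tau by (simp add: field_simps)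
    qed
  qed
  then show ?thesis by (simp add: filterlim_sequentially_Suc)
qed

lemma dy_lim:
  assumes S: "sp g fs K xh yh"
  shows "(\<lambda>k. y (Suc k) - y k) \<longlonglongrightarrow> 0"
proof (rule sq_to0[where C = "2 * \<sigma> / mua" and r = Rr])
  show "Rr \<longlonglongrightarrow> 0" by (rule Rr_lim[OF S])
  show "\<forall>\<^sub>F k in sequentially. norm (y (Suc k) - y k)^2 \<le> 2 * \<sigma> / mua * Rr k"
  proof (intro always_eventually allI)
    fix k
    have "mua * norm (y (k + 1) - y k)^2 / (2 * \<sigma>) \<le> Rr k" by (rule Rr_parts(2))
    then show "norm (y (Suc k) - y k)^2 \<le> 2 * \<sigma> / mua * Rr k" using mua_pos sig by (simp add: field_simps)
  qed
qed

lemma sq_frac_le: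
  fixes c :: real and v :: "'c::real_normed_vector"
  assumes "0 \<le> c" "c \<le> 1"
  shows "norm ((c * (1 - c)) *\<^sub>R v)^2 \<le> c * (1 - c) * norm v^2"
proof -
  have c1: "0 \<le> c * (1 - c)" "c * (1 - c) \<le> 1" using assms by (auto simp: mult_le_one)
  have "norm ((c * (1 - c)) *\<^sub>R v)^2 = (c * (1 - c))^2 * norm v^2" by (simp add: power_mult_distrib)
  also have "\<dots> \<le> (c * (1 - c)) * norm v^2"
  proof (rule mult_right_mono)
    have "(c * (1 - c)) * (c * (1 - c)) \<le> (c * (1 - c)) * 1" using c1 by (intro mult_left_mono) auto
    then show "(c * (1 - c))^2 \<le> c * (1 - c)" by (simp add: power2_eq_square)
  qed simp
  finally show ?thesis .
qed

lemma xmd_lim: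
  assumes S: "sp g fs K xh yh"
  shows "(\<lambda>k. xmd k - x k) \<longlonglongrightarrow> 0"
proof -
  have e: "xmd (Suc k) - x k = (a (Suc k) * (1 - a (Suc k))) *\<^sub>R (xag k - x k)" for k
  proof -
    have 1: "xmd (Suc k) - x k = a (Suc k) *\<^sub>R (xag (Suc k) - x k)" using upd_xmd[of "Suc k"] by (simp add: algebra_simps)
    have 2: "xag (Suc k) - x k = (1 - a (Suc k)) *\<^sub>R (xag k - x k)" using upd_xag[of "Suc k"] by (simp add: algebra_simps)
    show ?thesis unfolding 1 2 by simp
  qed
  have "(\<lambda>k. xmd (Suc k) - x k) \<longlonglongrightarrow> 0"
  proof (rule sq_to0[where C = "2 * \<tau>" and r = Rr])
    show "Rr \<longlonglongrightarrow> 0" by (rule Rr_lim[OF S])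
    show "\<forall>\<^sub>F k in sequentially. norm (xmd (Suc k) - x k)^2 \<le> 2 * \<tau> * Rr k"
    proof (intro always_eventually allI)
      fix k
      have a1: "0 \<le> a (Suc k)" "a (Suc k) \<le> 1" using a_range[of "Suc k"] by auto
      have "norm (xmd (Suc k) - x k)^2 \<le> ex (k + 1)" unfolding e ex_def using sq_frac_le[OF a1] by simp
      moreover have "ex (k + 1) / (2 * \<tau>) \<le> Rr k" by (rule Rr_parts(3))
      ultimately show "norm (xmd (Suc k) - x k)^2 \<le> 2 * \<tau> * Rr k" using tau by (simp add: field_simps)
    qed
  qed
  moreover have "(\<lambda>k. D (Suc k)) \<longlonglongrightarrow> 0" using D_lim[OF S] by (simp add: filterlim_sequentially_Suc)
  ultimately have "(\<lambda>k. (xmd (Suc k) - x k) - D (Suc k)) \<longlonglongrightarrow> 0 - 0" by (intro tendsto_intros)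
  then have "(\<lambda>k. xmd (Suc k) - x (Suc k)) \<longlonglongrightarrow> 0" unfolding D_def by simp
  then show ?thesis by (rule LIMSEQ_imp_Suc[where f = "\<lambda>k. xmd k - x k"])
qed

lemma ymd_lim:
  assumes S: "sp g fs K xh yh"
  shows "(\<lambda>k. ymd (Suc k) - y (Suc k)) \<longlonglongrightarrow> 0"
proof -
  have e: "ymd (Suc k) - y k = (b (Suc k) * (1 - b (Suc k))) *\<^sub>R (yag k - y k)" if k: "k \<ge> 1" for k
  proof -
    have 1: "ymd (Suc k) - y k = b (Suc k) *\<^sub>R (yag (Suc k) - y k)" using upd_ymd[OF k] by (simp add: algebra_simps)
    have 2: "yag (Suc k) - y k = (1 - b (Suc k)) *\<^sub>R (yag k - y k)" using upd_yag[OF k] by (simp add: algebra_simps)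
    show ?thesis unfolding 1 2 by simp
  qed
  have "(\<lambda>k. ymd (Suc k) - y k) \<longlonglongrightarrow> 0"
  proof (rule sq_to0[where C = "2 * \<sigma>" and r = Rr])
    show "Rr \<longlonglongrightarrow> 0" by (rule Rr_lim[OF S])
    show "\<forall>\<^sub>F k in sequentially. norm (ymd (Suc k) - y k)^2 \<le> 2 * \<sigma> * Rr k"
      unfolding eventually_sequentially
    proof (intro exI[of _ 1] allI impI)
      fix k :: nat assume k: "k \<ge> 1"
      have b1: "0 \<le> b (Suc k)" "b (Suc k) \<le> 1" using b_range[of "Suc k"] by auto
      have "norm (ymd (Suc k) - y k)^2 \<le> ey (k + 1)" unfolding e[OF k] ey_def using sq_frac_le[OF b1] by simp
      moreover have "ey (k + 1) / (2 * \<sigma>) \<le> Rr k" by (rule Rr_parts(4))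
      ultimately show "norm (ymd (Suc k) - y k)^2 \<le> 2 * \<sigma> * Rr k" using sig by (simp add: field_simps)
    qed
  qed
  then have "(\<lambda>k. (ymd (Suc k) - y k) - (y (Suc k) - y k)) \<longlonglongrightarrow> 0 - 0"
    by (intro tendsto_intros dy_lim[OF S])
  then show ?thesis by simp
qed

end


context npda begin

lemma Ktends: "f \<longlonglongrightarrow> l \<Longrightarrow> (\<lambda>n. K (f n)) \<longlonglongrightarrow> K l"
  by (rule bounded_linear.tendsto[OF Kbl])

lemma cluster:
  assumes S: "sp g fs K xh yh" and r: "strict_mono r"
    and xr: "(\<lambda>n. x (r n)) \<longlonglongrightarrow> xs" and yr: "(\<lambda>n. y (r n)) \<longlonglongrightarrow> ys"
  shows "sp g fs K xs ys"
proof -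
  define s where "s n = r (Suc n)" for n
  have s: "strict_mono s" unfolding s_def using r by (simp add: strict_mono_def)
  have s1: "s n \<ge> 1" for n unfolding s_def using seq_suble[OF r, of "Suc n"] by simp
  have xs': "(\<lambda>n. x (s n)) \<longlonglongrightarrow> xs" unfolding s_def using LIMSEQ_Suc[OF xr] .
  have ys': "(\<lambda>n. y (s n)) \<longlonglongrightarrow> ys" unfolding s_def using LIMSEQ_Suc[OF yr] .
  have md: "(\<lambda>n. xmd (s n) - x (s n)) \<longlonglongrightarrow> 0"
    using LIMSEQ_subseq_LIMSEQ[OF xmd_lim[OF S] s] by (simp add: o_def)
  have ymd': "(\<lambda>n. ymd (Suc (s n)) - y (Suc (s n))) \<longlonglongrightarrow> 0"
    using LIMSEQ_subseq_LIMSEQ[OF ymd_lim[OF S] s] by (simp add: o_def)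
  have dy': "(\<lambda>n. y (Suc (s n)) - y (s n)) \<longlonglongrightarrow> 0"
    using LIMSEQ_subseq_LIMSEQ[OF dy_lim[OF S] s] by (simp add: o_def)
  have D': "(\<lambda>n. D (s n)) \<longlonglongrightarrow> 0"
    using LIMSEQ_subseq_LIMSEQ[OF D_lim[OF S] s] by (simp add: o_def)
  have ys1: "(\<lambda>n. y (Suc (s n))) \<longlonglongrightarrow> ys"
  proof -
    have "(\<lambda>n. y (s n) + (y (Suc (s n)) - y (s n))) \<longlonglongrightarrow> ys + 0" by (intro tendsto_intros ys' dy')
    then show ?thesis by simp
  qed
  have xb: "(\<lambda>n. xbar (s n)) \<longlonglongrightarrow> xs"
  proof -
    have "(\<lambda>n. x (s n) + D (s n)) \<longlonglongrightarrow> xs + 0" by (intro tendsto_intros xs' D')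
    moreover have "xbar (s n) = x (s n) + D (s n)" for n unfolding D_def using upd_xbar[OF s1[of n]] by simp
    ultimately show ?thesis by simp
  qed
  have clg: "closed (epigraph_e g)" and clf: "closed (epigraph_e fs)" using gg gfs unfolding good_def by auto
  have gx: "g xs \<le> ereal (G w + K (w - xs) \<bullet> ys)" if w: "g w \<noteq> \<infinity>" for w
  proof -
    have "g xs \<le> ereal (G w - (0 \<bullet> (w - xs)) / \<tau> + K (w - xs) \<bullet> ys)"
    proof (rule lsc_seq[OF clg xs'])
      show "(\<lambda>n. G w - ((xmd (s n) - x (s n)) \<bullet> (w - x (s n))) / \<tau> + K (w - x (s n)) \<bullet> y (s n))
          \<longlonglongrightarrow> G w - (0 \<bullet> (w - xs)) / \<tau> + K (w - xs) \<bullet> ys"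
        by (intro tendsto_intros md xs' ys' Ktends) (use tau in simp)
      fix n
      have "G (x (s n)) + (xmd (s n) - x (s n)) \<bullet> (w - x (s n)) / \<tau> - K (w - x (s n)) \<bullet> y (s n) \<le> G w"
        by (rule px_real[OF s1 w])
      then show "g (x (s n)) \<le> ereal (G w - ((xmd (s n) - x (s n)) \<bullet> (w - x (s n))) / \<tau> + K (w - x (s n)) \<bullet> y (s n))"
        using gG[OF px(1)[OF s1[of n]]] by simp
    qed
    then show ?thesis by simp
  qed
  have fy: "fs ys \<le> ereal (F w - K xs \<bullet> (w - ys))" if w: "fs w \<noteq> \<infinity>" for w
  proof -
    have "fs ys \<le> ereal (F w - (0 \<bullet> (w - ys)) / \<sigma> - K xs \<bullet> (w - ys))"
    proof (rule lsc_seq[OF clf ys1])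
      show "(\<lambda>n. F w - ((ymd (Suc (s n)) - y (Suc (s n))) \<bullet> (w - y (Suc (s n)))) / \<sigma> - K (xbar (s n)) \<bullet> (w - y (Suc (s n))))
          \<longlonglongrightarrow> F w - (0 \<bullet> (w - ys)) / \<sigma> - K xs \<bullet> (w - ys)"
        by (intro tendsto_intros ymd' ys1 xb Ktends) (use sig in simp)
      fix n
      have "F (y (s n + 1)) + (ymd (s n + 1) - y (s n + 1)) \<bullet> (w - y (s n + 1)) / \<sigma> + K (xbar (s n)) \<bullet> (w - y (s n + 1)) \<le> F w"
        by (rule py_real[OF s1 w])
      then show "fs (y (Suc (s n))) \<le> ereal (F w - ((ymd (Suc (s n)) - y (Suc (s n))) \<bullet> (w - y (Suc (s n)))) / \<sigma> - K (xbar (s n)) \<bullet> (w - y (Suc (s n))))"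
        using fF[OF py(1)[OF s1[of n]]] by simp
    qed
    then show ?thesis by simp
  qed
  obtain w0 where w0: "g w0 \<noteq> \<infinity>" using gg unfolding good_def by auto
  obtain v0 where v0: "fs v0 \<noteq> \<infinity>" using gfs unfolding good_def by auto
  have gxs: "g xs \<noteq> \<infinity>" using gx[OF w0] by auto
  have fys: "fs ys \<noteq> \<infinity>" using fy[OF v0] by auto
  have i1: "ereal (real_of_ereal (g xs) - K (w - xs) \<bullet> ys) \<le> g w" for w
  proof (cases "g w = \<infinity>")
    case False
    then have "G xs \<le> G w + K (w - xs) \<bullet> ys" using gx[OF False] gG[OF gxs] by simp
    then have "ereal (G xs - K (w - xs) \<bullet> ys) \<le> ereal (G w)" by simp
    then show ?thesis using gG[OF False] by (simp add: G_def[symmetric])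
  qed simp
  have i2: "ereal (real_of_ereal (fs ys) + K xs \<bullet> (w - ys)) \<le> fs w" for w
  proof (cases "fs w = \<infinity>")
    case False
    then have "F ys \<le> F w - K xs \<bullet> (w - ys)" using fy[OF False] fF[OF fys] by simp
    then have "ereal (F ys + K xs \<bullet> (w - ys)) \<le> ereal (F w)" by simp
    then show ?thesis using fF[OF False] by (simp add: F_def[symmetric])
  qed simp
  show ?thesis unfolding sp_def using gxs fys i1 i2 by blast
qed

end


lemma sub_conv:
  fixes u :: "nat \<Rightarrow> 'a::euclidean_space"
  assumes bd: "bounded (range u)"
    and H: "\<And>r l. strict_mono r \<Longrightarrow> (\<lambda>n. u (r n)) \<longlonglongrightarrow> l \<Longrightarrow> l = z"
  shows "u \<longlonglongrightarrow> z"
proof (rule ccontr)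
  assume nc: "\<not> u \<longlonglongrightarrow> z"
  then obtain \<epsilon> where ep: "\<epsilon> > 0" and inf: "\<forall>N. \<exists>n\<ge>N. dist (u n) z \<ge> \<epsilon>"
    unfolding LIMSEQ_def by (auto simp: not_less)
  define P where "P = {n. dist (u n) z \<ge> \<epsilon>}"
  have infP: "infinite P" unfolding P_def infinite_nat_iff_unbounded_le using inf by auto
  define s where "s = enumerate P"
  have s: "strict_mono s" unfolding s_def by (rule strict_mono_enumerate[OF infP])
  have sP: "dist (u (s n)) z \<ge> \<epsilon>" for n using enumerate_in_set[OF infP, of n] unfolding s_def P_def by simp
  have "bounded (range (u \<circ> s))" using bd by (rule bounded_subset) auto
  then obtain l r where r: "strict_mono r" "((u \<circ> s) \<circ> r) \<longlonglongrightarrow> l"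
    using bounded_imp_convergent_subsequence by blast
  have sr: "strict_mono (s \<circ> r)" using s r(1) by (rule strict_mono_o)
  have "(\<lambda>n. u ((s \<circ> r) n)) \<longlonglongrightarrow> l" using r(2) by (simp add: o_def)
  then have lz: "l = z" using H[OF sr] by blast
  have "(\<lambda>n. dist (u (s (r n))) z) \<longlonglongrightarrow> dist l z"
    using r(2) by (intro tendsto_intros) (simp add: o_def)
  then have "\<epsilon> \<le> dist l z" by (rule LIMSEQ_le_const) (use sP in auto)
  then show False using lz ep by simp
qed

lemma wdiff:
  fixes p1 p2 c b1 b2 e t Y z :: real
  shows "(p1 + c * b1 + e) / t + Y + z - ((p2 + c * b2 + e) / t + Y + z) = ((p1 - p2) + c * (b1 - b2)) / t"
  by (simp add: diff_divide_distrib[symmetric] algebra_simps)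

lemma wdiff2:
  fixes p1 p2 c b1 b2 e t Y z1 z2 :: real
  shows "Y + (p1 + c * b1) / t + z1 - (Y + (p2 + c * b2) / t + z2) = ((p1 - p2) + c * (b1 - b2)) / t + (z1 - z2)"
  by (simp add: diff_divide_distrib[symmetric] algebra_simps)

lemma solve_ab:
  fixes al be c N t Wd :: real
  assumes "t > 0" "Wd = ((- 2 * al + N) + c * (- 2 * be + N)) / (2 * t)"
  shows "al + c * be = ((1 + c) * N) / 2 - t * Wd"
  using assms by (simp add: field_simps)

context npda begin

lemma sp_prod:
  assumes "sp g fs K x1 y1" "sp g fs K x2 y2"
  shows "sp g fs K x1 y2"
proof -
  have gm: "\<And>x. g x \<noteq> -\<infinity>" and gf: "\<exists>x. g x \<noteq> \<infinity>" using gg unfolding good_def by auto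
  have fm: "\<And>y. fs y \<noteq> -\<infinity>" and ff: "\<exists>y. fs y \<noteq> \<infinity>" using gfs unfolding good_def by auto
  note eq = saddle_iff_sp[OF gm gf fm ff K]
  have 1: "saddle_point (\<lambda>x y. g x + ereal (K x \<bullet> y) - fs y) x1 y1" using eq assms(1) by blast
  have 2: "saddle_point (\<lambda>x y. g x + ereal (K x \<bullet> y) - fs y) x2 y2" using eq assms(2) by blast
  have "saddle_point (\<lambda>x y. g x + ereal (K x \<bullet> y) - fs y) x1 y2" by (rule saddle_prod[OF 1 2])
  then show ?thesis using eq by blast
qed

lemma x_normbound:
  assumes S: "sp g fs K xh yh"
  obtains Bx where "\<And>k. norm (x k) \<le> Bx"
  using x_bounded[OF S] unfolding bounded_iff by auto

lemma opial_x:
  assumes S1: "sp g fs K xs ys" and S2: "sp g fs K x2 ys"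
    and r1: "strict_mono r1" "(\<lambda>n. x (r1 n)) \<longlonglongrightarrow> xs"
    and r2: "strict_mono r2" "(\<lambda>n. x (r2 n)) \<longlonglongrightarrow> x2"
  shows "x2 = xs"
proof -
  define d where "d = xs - x2"
  define N where "N = norm xs^2 - norm x2^2"
  have nd: "norm (u - xs)^2 - norm (u - x2)^2 = - 2 * (u \<bullet> d) + N" for u
    unfolding N_def d_def by (simp add: nsq_diff inner_diff_right)
  have Wd: "W xs ys k - W x2 ys k = ((- 2 * (x k \<bullet> d) + N) + (1 - a k) * (- 2 * (xag k \<bullet> d) + N)) / (2 * \<tau>)" for k
  proof -
    have "W xs ys k - W x2 ys k = ((norm (x k - xs)^2 - norm (x k - x2)^2) + (1 - a k) * (norm (xag k - xs)^2 - norm (xag k - x2)^2)) / (2 * \<tau>)"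
      unfolding W_def by (rule wdiff)
    then show ?thesis unfolding nd .
  qed
  have ex: "(x k \<bullet> d) + (1 - a k) * (xag k \<bullet> d) = ((1 + (1 - a k)) * N) / 2 - \<tau> * (W xs ys k - W x2 ys k)" for k
    by (rule solve_ab[OF tau Wd])
  obtain l1 where l1: "W xs ys \<longlonglongrightarrow> l1" using W_conv[OF S1] by (auto simp: convergent_def)
  obtain l2 where l2: "W x2 ys \<longlonglongrightarrow> l2" using W_conv[OF S2] by (auto simp: convergent_def)
  obtain la where la: "a \<longlonglongrightarrow> la" using a_conv by blast
  have lim: "(\<lambda>k. (x k \<bullet> d) + (1 - a k) * (xag k \<bullet> d)) \<longlonglongrightarrow> ((1 + (1 - la)) * N) / 2 - \<tau> * (l1 - l2)"
    unfolding ex by (intro tendsto_intros l1 l2 la) simp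
  obtain Bx where Bx: "\<And>k. norm (x k) \<le> Bx" using x_normbound[OF S1] by blast
  have "convergent (\<lambda>k. x k \<bullet> d)"
  proof (rule SL[where c = a and \<beta> = "\<lambda>k. xag k \<bullet> d" and M = "Bx * norm d"])
    show "\<And>k. k \<ge> 1 \<Longrightarrow> 0 < a k \<and> a k < 1" by (rule a_range)
    show "\<And>k. k \<ge> 1 \<Longrightarrow> a (Suc k) \<le> a k" by (rule a_mono)
    show "xag (Suc k) \<bullet> d = (1 - a (Suc k)) * (xag k \<bullet> d) + a (Suc k) * (x k \<bullet> d)" for k
      using upd_xag[of "Suc k"] by (simp add: inner_add_left)
    show "\<bar>x k \<bullet> d\<bar> \<le> Bx * norm d" for k
      using Cauchy_Schwarz_ineq2[of "x k" d] Bx[of k] by (meson mult_right_mono norm_ge_zero order_trans)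
    show "(\<lambda>k. x k \<bullet> d + (1 - a k) * (xag k \<bullet> d)) \<longlonglongrightarrow> ((1 + (1 - la)) * N) / 2 - \<tau> * (l1 - l2)" by (rule lim)
  qed
  then obtain L where L: "(\<lambda>k. x k \<bullet> d) \<longlonglongrightarrow> L" by (auto simp: convergent_def)
  have "(\<lambda>n. x (r1 n) \<bullet> d) \<longlonglongrightarrow> L" using LIMSEQ_subseq_LIMSEQ[OF L r1(1)] by (simp add: o_def)
  moreover have "(\<lambda>n. x (r1 n) \<bullet> d) \<longlonglongrightarrow> xs \<bullet> d" by (intro tendsto_intros r1(2))
  ultimately have 1: "xs \<bullet> d = L" using LIMSEQ_unique by blast
  have "(\<lambda>n. x (r2 n) \<bullet> d) \<longlonglongrightarrow> L" using LIMSEQ_subseq_LIMSEQ[OF L r2(1)] by (simp add: o_def)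
  moreover have "(\<lambda>n. x (r2 n) \<bullet> d) \<longlonglongrightarrow> x2 \<bullet> d" by (intro tendsto_intros r2(2))
  ultimately have 2: "x2 \<bullet> d = L" using LIMSEQ_unique by blast
  have "d \<bullet> d = 0" using 1 2 unfolding d_def by (simp add: inner_diff_left)
  then show ?thesis unfolding d_def by simp
qed

end


context npda begin

lemma y_normbound:
  assumes S: "sp g fs K xh yh"
  obtains By where "\<And>k. norm (y k) \<le> By"
  using y_bounded[OF S] unfolding bounded_iff by auto

lemma opial_y:
  assumes S1: "sp g fs K xs ys" and S2: "sp g fs K xs y2"
    and r1: "strict_mono r1" "(\<lambda>n. y (r1 n)) \<longlonglongrightarrow> ys"
    and r2: "strict_mono r2" "(\<lambda>n. y (r2 n)) \<longlonglongrightarrow> y2"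
  shows "y2 = ys"
proof -
  define d where "d = ys - y2"
  define N where "N = norm ys^2 - norm y2^2"
  have nd: "norm (u - ys)^2 - norm (u - y2)^2 = - 2 * (u \<bullet> d) + N" for u
    unfolding N_def d_def by (simp add: nsq_diff inner_diff_right)
  define z where "z k = K (D k) \<bullet> (y k - ys) - K (D k) \<bullet> (y k - y2)" for k
  have Wd: "(W xs ys k - W xs y2 k) - z k = ((- 2 * (y k \<bullet> d) + N) + (1 - b k) * (- 2 * (yag k \<bullet> d) + N)) / (2 * \<sigma>)" for k
  proof -
    have "W xs ys k - W xs y2 k = ((norm (y k - ys)^2 - norm (y k - y2)^2) + (1 - b k) * (norm (yag k - ys)^2 - norm (yag k - y2)^2)) / (2 * \<sigma>) + z k"
      unfolding W_def z_def by (rule wdiff2)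
    then show ?thesis unfolding nd by simp
  qed
  have ex: "(y k \<bullet> d) + (1 - b k) * (yag k \<bullet> d) = ((1 + (1 - b k)) * N) / 2 - \<sigma> * ((W xs ys k - W xs y2 k) - z k)" for k
    by (rule solve_ab[OF sig Wd])
  obtain l1 where l1: "W xs ys \<longlonglongrightarrow> l1" using W_conv[OF S1] by (auto simp: convergent_def)
  obtain l2 where l2: "W xs y2 \<longlonglongrightarrow> l2" using W_conv[OF S2] by (auto simp: convergent_def)
  obtain lb where lb: "b \<longlonglongrightarrow> lb" using b_conv by blast
  have z0: "z \<longlonglongrightarrow> 0"
  proof -
    have e: "z k = K (D k) \<bullet> (y2 - ys)" for k unfolding z_def by (simp add: inner_diff_right)
    have "(\<lambda>k. K (D k) \<bullet> (y2 - ys)) \<longlonglongrightarrow> K 0 \<bullet> (y2 - ys)"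
      by (intro tendsto_intros Ktends D_lim[OF S1])
    then show ?thesis unfolding e using K by (simp add: linear_0)
  qed
  have lim: "(\<lambda>k. (y k \<bullet> d) + (1 - b k) * (yag k \<bullet> d)) \<longlonglongrightarrow> ((1 + (1 - lb)) * N) / 2 - \<sigma> * ((l1 - l2) - 0)"
    unfolding ex by (intro tendsto_intros l1 l2 lb z0) simp
  obtain By where By: "\<And>k. norm (y k) \<le> By" using y_normbound[OF S1] by blast
  have "convergent (\<lambda>k. y k \<bullet> d)"
  proof (rule SL[where c = b and \<beta> = "\<lambda>k. yag k \<bullet> d" and M = "By * norm d"])
    show "\<And>k. k \<ge> 1 \<Longrightarrow> 0 < b k \<and> b k < 1" by (rule b_range)
    show "\<And>k. k \<ge> 1 \<Longrightarrow> b (Suc k) \<le> b k" by (rule b_mono)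
    show "yag (Suc k) \<bullet> d = (1 - b (Suc k)) * (yag k \<bullet> d) + b (Suc k) * (y k \<bullet> d)" if "k \<ge> 1" for k
      using upd_yag[OF that] by (simp add: inner_add_left)
    show "\<bar>y k \<bullet> d\<bar> \<le> By * norm d" for k
      using Cauchy_Schwarz_ineq2[of "y k" d] By[of k] by (meson mult_right_mono norm_ge_zero order_trans)
    show "(\<lambda>k. y k \<bullet> d + (1 - b k) * (yag k \<bullet> d)) \<longlonglongrightarrow> ((1 + (1 - lb)) * N) / 2 - \<sigma> * ((l1 - l2) - 0)" by (rule lim)
  qed
  then obtain L where L: "(\<lambda>k. y k \<bullet> d) \<longlonglongrightarrow> L" by (auto simp: convergent_def)
  have "(\<lambda>n. y (r1 n) \<bullet> d) \<longlonglongrightarrow> L" using LIMSEQ_subseq_LIMSEQ[OF L r1(1)] by (simp add: o_def)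
  moreover have "(\<lambda>n. y (r1 n) \<bullet> d) \<longlonglongrightarrow> ys \<bullet> d" by (intro tendsto_intros r1(2))
  ultimately have 1: "ys \<bullet> d = L" using LIMSEQ_unique by blast
  have "(\<lambda>n. y (r2 n) \<bullet> d) \<longlonglongrightarrow> L" using LIMSEQ_subseq_LIMSEQ[OF L r2(1)] by (simp add: o_def)
  moreover have "(\<lambda>n. y (r2 n) \<bullet> d) \<longlonglongrightarrow> y2 \<bullet> d" by (intro tendsto_intros r2(2))
  ultimately have 2: "y2 \<bullet> d = L" using LIMSEQ_unique by blast
  have "d \<bullet> d = 0" using 1 2 unfolding d_def by (simp add: inner_diff_left)
  then show ?thesis unfolding d_def by simp
qed

theorem main_conv:
  assumes "\<exists>xh yh. sp g fs K xh yh"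
  shows "\<exists>xs ys. sp g fs K xs ys \<and> (\<lambda>k. (x k, y k)) \<longlonglongrightarrow> (xs, ys)"
proof -
  obtain xh yh where S: "sp g fs K xh yh" using assms by blast
  have bx: "bounded (range x)" by (rule x_bounded[OF S])
  have by': "bounded (range y)" by (rule y_bounded[OF S])
  have "bounded (range (\<lambda>k. (x k, y k)))"
    by (rule bounded_subset[OF bounded_Times[OF bx by']]) auto
  then obtain p r where r: "strict_mono r" "((\<lambda>k. (x k, y k)) \<circ> r) \<longlonglongrightarrow> p"
    using bounded_imp_convergent_subsequence by blast
  define xs where "xs = fst p"
  define ys where "ys = snd p"
  have xr: "(\<lambda>n. x (r n)) \<longlonglongrightarrow> xs" unfolding xs_def using tendsto_fst[OF r(2)] by (simp add: o_def)
  have yr: "(\<lambda>n. y (r n)) \<longlonglongrightarrow> ys" unfolding ys_def using tendsto_snd[OF r(2)] by (simp add: o_def)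
  have Ss: "sp g fs K xs ys" by (rule cluster[OF S r(1) xr yr])
  have xc: "x \<longlonglongrightarrow> xs"
  proof (rule sub_conv[OF bx])
    fix r2 l assume r2: "strict_mono r2" "(\<lambda>n. x (r2 n)) \<longlonglongrightarrow> l"
    have "bounded (range (\<lambda>n. y (r2 n)))" using by' by (rule bounded_subset) auto
    then obtain y2 r3 where r3: "strict_mono r3" "((\<lambda>n. y (r2 n)) \<circ> r3) \<longlonglongrightarrow> y2"
      using bounded_imp_convergent_subsequence by blast
    have r23: "strict_mono (r2 \<circ> r3)" using r2(1) r3(1) by (rule strict_mono_o)
    have x23: "(\<lambda>n. x ((r2 \<circ> r3) n)) \<longlonglongrightarrow> l"
      using LIMSEQ_subseq_LIMSEQ[OF r2(2) r3(1)] by (simp add: o_def)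
    have y23: "(\<lambda>n. y ((r2 \<circ> r3) n)) \<longlonglongrightarrow> y2" using r3(2) by (simp add: o_def)
    have "sp g fs K l y2" by (rule cluster[OF S r23 x23 y23])
    then have "sp g fs K l ys" using Ss sp_prod by blast
    then show "l = xs" by (rule opial_x[OF Ss _ r(1) xr r23 x23])
  qed
  have yc: "y \<longlonglongrightarrow> ys"
  proof (rule sub_conv[OF by'])
    fix r2 l assume r2: "strict_mono r2" "(\<lambda>n. y (r2 n)) \<longlonglongrightarrow> l"
    have "bounded (range (\<lambda>n. x (r2 n)))" using bx by (rule bounded_subset) auto
    then obtain x2 r3 where r3: "strict_mono r3" "((\<lambda>n. x (r2 n)) \<circ> r3) \<longlonglongrightarrow> x2"
      using bounded_imp_convergent_subsequence by blast
    have r23: "strict_mono (r2 \<circ> r3)" using r2(1) r3(1) by (rule strict_mono_o)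
    have y23: "(\<lambda>n. y ((r2 \<circ> r3) n)) \<longlonglongrightarrow> l"
      using LIMSEQ_subseq_LIMSEQ[OF r2(2) r3(1)] by (simp add: o_def)
    have x23: "(\<lambda>n. x ((r2 \<circ> r3) n)) \<longlonglongrightarrow> x2" using r3(2) by (simp add: o_def)
    have "sp g fs K x2 l" by (rule cluster[OF S r23 x23 y23])
    then have "sp g fs K xs l" using Ss sp_prod by blast
    then show "l = ys" by (rule opial_y[OF Ss _ r(1) yr r23 y23])
  qed
  show ?thesis using Ss tendsto_Pair[OF xc yc] by blast
qed

end


theorem theorem3p1:
  fixes g :: "'a::euclidean_space \<Rightarrow> ereal"
    and f :: "'b::euclidean_space \<Rightarrow> ereal"
    and K :: "'a \<Rightarrow> 'b"
    and a b :: "nat \<Rightarrow> real"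
    and \<tau> \<sigma> \<theta> :: real
    and x xag xmd xbar :: "nat \<Rightarrow> 'a"
    and y yag ymd :: "nat \<Rightarrow> 'b"
  assumes g: "proper_fun g" "convex_fun g" "closed_fun g"
    and f: "proper_fun f" "convex_fun f" "closed_fun f"
    and K: "linear K"
    and saddle_exists: "\<exists>xh yh. saddle_point (lagr g f K) xh yh"
    and a_range: "\<And>k. k \<ge> 1 \<Longrightarrow> 0 < a k \<and> a k < 1"
    and b_range: "\<And>k. k \<ge> 1 \<Longrightarrow> 0 < b k \<and> b k < 1"
    and a_mono: "\<And>k. k \<ge> 1 \<Longrightarrow> a (Suc k) \<le> a k"
    and b_mono: "\<And>k. k \<ge> 1 \<Longrightarrow> b (Suc k) \<le> b k"
    and steps: "\<tau> > 0" "\<sigma> > 0"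
    and step_a: "\<And>k. k \<ge> 1 \<Longrightarrow> sqrt (\<sigma> * \<tau>) * onorm K < 1 - a k"
    and step_b: "\<And>k. k \<ge> 1 \<Longrightarrow> sqrt (\<sigma> * \<tau>) * onorm K < 1 - b k"
    and theta: "\<theta> = 1"
    and init_x: "xag 0 = x 0"
    and init_y: "yag 1 = y 1"
    and upd_xag: "\<And>k. k \<ge> 1 \<Longrightarrow> xag k = (1 - a k) *\<^sub>R xag (k - 1) + a k *\<^sub>R x (k - 1)"
    and upd_yag: "\<And>k. k \<ge> 1 \<Longrightarrow> yag (k + 1) = (1 - b (k + 1)) *\<^sub>R yag k + b (k + 1) *\<^sub>R y k"
    and upd_xmd: "\<And>k. k \<ge> 1 \<Longrightarrow> xmd k = (1 - a k) *\<^sub>R x (k - 1) + a k *\<^sub>R xag k"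
    and upd_ymd: "\<And>k. k \<ge> 1 \<Longrightarrow> ymd (k + 1) = (1 - b (k + 1)) *\<^sub>R y k + b (k + 1) *\<^sub>R yag (k + 1)"
    and upd_x: "\<And>k. k \<ge> 1 \<Longrightarrow> x k = prox \<tau> g (xmd k - \<tau> *\<^sub>R adjoint K (y k))"
    and upd_xbar: "\<And>k. k \<ge> 1 \<Longrightarrow> xbar k = x k + \<theta> *\<^sub>R (x k - x (k - 1))"
    and upd_y: "\<And>k. k \<ge> 1 \<Longrightarrow> y (k + 1) = prox \<sigma> (conj_fun f) (ymd (k + 1) + \<sigma> *\<^sub>R K (xbar k))"
  shows "\<exists>xh yh. saddle_point (lagr g f K) xh yh \<and> ((\<lambda>k. (x k, y k)) \<longlonglongrightarrow> (xh, yh))"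
proof -
  have lag: "lagr g f K = (\<lambda>x y. g x + ereal (K x \<bullet> y) - conj_fun f y)"
    unfolding lagr_def by (intro ext) simp
  have gfs: "good (conj_fun f)" by (rule good_conj[OF f])
  have gm: "\<And>x. g x \<noteq> -\<infinity>" and gf: "\<exists>x. g x \<noteq> \<infinity>" using g(1) unfolding proper_fun_def by auto
  have fm: "\<And>y. conj_fun f y \<noteq> -\<infinity>" and ff: "\<exists>y. conj_fun f y \<noteq> \<infinity>" using gfs unfolding good_def by auto
  note eq = saddle_iff_sp[OF gm gf fm ff K]
  obtain xh yh where S0: "saddle_point (lagr g f K) xh yh" using saddle_exists by blast
  have S: "sp g (conj_fun f) K xh yh" using S0 eq unfolding lag by blast
  have gg: "good g"
  proof -
    have "g xh \<noteq> \<infinity>" using S unfolding sp_def by auto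
    have lb: "ereal (real_of_ereal (g xh) - K (w - xh) \<bullet> yh) \<le> g w" for w using S unfolding sp_def by auto
    have "real_of_ereal (g xh) - K (w - xh) \<bullet> yh = (- adjoint K yh) \<bullet> w + (real_of_ereal (g xh) + K xh \<bullet> yh)" for w
    proof -
      have "adjoint K yh \<bullet> w = K w \<bullet> yh" by (subst inner_commute) (rule adjoint_works[OF K])
      then show ?thesis using K by (simp add: linear_diff inner_diff_left)
    qed
    then have "\<forall>w. ereal ((- adjoint K yh) \<bullet> w + (real_of_ereal (g xh) + K xh \<bullet> yh)) \<le> g w" using lb by metis
    then show ?thesis unfolding good_def using gm gf g(2,3) unfolding convex_fun_def closed_fun_def by blast
  qed
  have xb: "\<And>k. k \<ge> 1 \<Longrightarrow> xbar k = x k + (x k - x (k - 1))" using upd_xbar theta by simp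
  interpret N: npda g "conj_fun f" K a b \<tau> \<sigma> x xag xmd xbar y yag ymd
    by (rule npda.intro[OF gg gfs K a_range b_range a_mono b_mono steps step_a step_b upd_xag upd_yag upd_xmd upd_ymd upd_x xb upd_y])
  obtain xs ys where R: "sp g (conj_fun f) K xs ys" "(\<lambda>k. (x k, y k)) \<longlonglongrightarrow> (xs, ys)"
    using N.main_conv S by blast
  have "saddle_point (lagr g f K) xs ys" using R(1) eq unfolding lag by blast
  then show ?thesis using R(2) by blast
qed

end
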